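(* Let $\overline m<\overline m'$ be maximum memory lengths. For GP-ASSMs (as defined in the context) with states $\bm x_t^m$ (memory $\overline m$) and $\bm x_t^{m'}$ (memory $\overline m'$), built from the same training data, kernel and mean function, with the same input sequence and the same initial state $\bm x_0^m=\bm x_0^{m'}\in\mathbb{R}^{n_x}$, the implication $$\sup_{t\in\mathbb{N}}\mathbb E\|\bm x_t^m\|^p<\infty\ \Longrightarrow\ \sup_{t\in\mathbb{N}}\mathbb E\|\bm x_t^{m'}\|^p<\infty$$ does not hold in general, for any $p\in\mathbb{N}$; that is, boundedness of the $p$-th moments of the GP-ASSM with memory $\overline m$ does not imply boundedness of the $p$-th moments of the GP-ASSM with the longer memory $\overline m'$.
   Context: Training set $\mathcal D=\{X,Y\}$ with input matrix $X\in\mathbb{R}^{n_\xi\times n_{\mathcal D}}$ and output matrix $Y\in\mathbb{R}^{n_{\mathcal D}\times n_x}$, outputs corrupted by Gaussian noise $\mathcal N(0,\sigma_n^2 I)$. A kernel $k:\mathbb{R}^{n_\xi}\times\mathbb{R}^{n_\xi}\to\mathbb{R}$ (symmetric, positive semidefinite, not necessarily bounded) and a continuous mean function $m:\mathbb{R}^{n_\xi}\to\mathbb{R}$ are used for every output dimension. For matrices $A=[a_1,\dots,a_p]$, $B=[b_1,\dots,b_q]$ with columns in $\mathbb{R}^{n_\xi}$, $K(A,B)$ is the $p\times q$ matrix with entries $k(a_i,b_j)$, $\bm k(z,A)=(k(z,a_1),\dots,k(z,a_p))^\top$, $\bm m(A)=(m(a_1),\dots,m(a_p))^\top$, and $K:=K(X,X)$.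 GP-ASSM with maximum memory length $\overline m\in\mathbb{N}\cup\{\infty\}$: states $\bm x_t\in\mathbb{R}^{n_x}$, inputs $\bm u_t\in\mathbb{R}^{n_u}$, $\bm\xi_t=[\bm x_t;\bm u_t]\in\mathbb{R}^{n_\xi}$, $n_\xi=n_x+n_u$. For $t\in\mathbb{N}$ let $\underline m=\min(t,\overline m)$, memory $\Xi^m_t=[\bm\xi_{t-1},\dots,\bm\xi_{t-\underline m}]$ (empty if $\underline m=0$), $X^m_t=[X,\bm\xi_{t-\underline m},\dots,\bm\xi_{t-1}]$, $Y^m_t=[Y^\top,\bm x_{t-\underline m+1},\dots,\bm x_t]^\top$, and with $\Xi=[\bm\xi_{t-\underline m},\dots,\bm\xi_{t-1}]$, $K^m_t=\begin{bmatrix}K+\sigma_n^2I & K(X,\Xi)\\ K(\Xi,X)&K(\Xi,\Xi)\end{bmatrix}$ (and $K^m_t=K+\sigma_n^2 I$ if $\underline m=0$). Define $\bm f_t(\bm\xi_t,\Xi^m_t)\in\mathbb{R}^{n_x}$ with $i$-th component $m(\bm\xi_t)+\bm k(\bm\xi_t,X^m_t)^\top(K^m_t)^{-1}\big((Y^m_t)_{:,i}-\bm m(X^m_t)\big)$ and the diagonal matrix $F_t(\bm\xi_t,\Xi^m_t)$ with all diagonal entries $k(\bm\xi_t,\bm\xi_t)-\bm k(\bm\xi_t,X^m_t)^\top(K^m_t)^{-1}\bm k(\bm\xi_t,X^m_t)$ (inverses are Moore–Penrose pseudoinverses if singular). The GP-ASSM is the stochastic process obtained by sequentially sampling $\bm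 x^m_{t+1}\mid\bm\xi_{0:t}\sim\mathcal N(\bm f_t(\bm\xi_t,\Xi^m_t),F_t(\bm\xi_t,\Xi^m_t))$; the process with $\overline m'$ is defined in the same way along its own trajectory $\bm\xi'_t=[\bm x^{m'}_t;\bm u_t]$. *)

theory Defs
  imports "HOL-Probability.Probability" "Jordan_Normal_Form.Matrix"
begin

definition pinv :: "real mat \<Rightarrow> real mat" where
  "pinv A = (THE B. B \<in> carrier_mat (dim_col A) (dim_row A) \<and>
       A * B * A = A \<and> B * A * B = B \<and>
       transpose_mat (A * B) = A * B \<and> transpose_mat (B * A) = B * A)"

definition vnorm :: "real vec \<Rightarrow> real" where
  "vnorm v = sqrt (\<Sum>i<dim_vec v. (v $ i)\<^sup>2)"

definition gram :: "(real vec \<Rightarrow> real vec \<Rightarrow> real) \<Rightarrow> real vec list \<Rightarrow> real vec list \<Rightarrow> real mat" where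
  "gram k A B = mat (length A) (length B) (\<lambda>(i,j). k (A ! i) (B ! j))"

definition kvec :: "(real vec \<Rightarrow> real vec \<Rightarrow> real) \<Rightarrow> real vec \<Rightarrow> real vec list \<Rightarrow> real vec" where
  "kvec k z A = vec (length A) (\<lambda>i. k z (A ! i))"

definition mvec :: "(real vec \<Rightarrow> real) \<Rightarrow> real vec list \<Rightarrow> real vec" where
  "mvec mf A = vec (length A) (\<lambda>i. mf (A ! i))"

definition sym_kernel_on :: "nat \<Rightarrow> (real vec \<Rightarrow> real vec \<Rightarrow> real) \<Rightarrow> bool" where
  "sym_kernel_on n k \<longleftrightarrow>
     (\<forall>a b. a \<in> carrier_vec n \<longrightarrow> b \<in> carrier_vec n \<longrightarrow> k a b = k b a)"

definition psd_kernel_on :: "nat \<Rightarrow> (real vec \<Rightarrow> real vec \<Rightarrow> real) \<Rightarrow> bool" where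
  "psd_kernel_on n k \<longleftrightarrow>
     (\<forall>zs c. set zs \<subseteq> carrier_vec n \<longrightarrow>
        (\<Sum>i<length zs. \<Sum>j<length zs. c i * c j * k (zs ! i) (zs ! j)) \<ge> 0)"

definition continuous_mean_on :: "nat \<Rightarrow> (real vec \<Rightarrow> real) \<Rightarrow> bool" where
  "continuous_mean_on n mf \<longleftrightarrow>
     (\<forall>a \<in> carrier_vec n. \<forall>e>0. \<exists>d>0. \<forall>b \<in> carrier_vec n.
        vnorm (b - a) < d \<longrightarrow> \<bar>mf b - mf a\<bar> < e)"

text \<open>States x \<in> R^nx are represented as functions nat \<Rightarrow> real (components i < nx),
  inputs likewise with components i < nu; a trajectory prefix x_0..x_t is a function
  nat \<Rightarrow> (nat \<Rightarrow> real) (indices \<le> t).  Parameters: nx nu, training inputs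
  X (n_xi \<times> n_D), outputs Y (n_D \<times> nx), noise std sn, kernel k, mean mf,
  memory bound mb, input sequence u.\<close>

definition xi_of :: "nat \<Rightarrow> nat \<Rightarrow> (nat \<Rightarrow> real) \<Rightarrow> (nat \<Rightarrow> real) \<Rightarrow> real vec" where
  "xi_of nx nu x uu = vec (nx + nu) (\<lambda>i. if i < nx then x i else uu (i - nx))"

definition mem_len :: "enat \<Rightarrow> nat \<Rightarrow> nat" where
  "mem_len mb t = (if enat t \<le> mb then t else the_enat mb)"

definition Kmem :: "nat \<Rightarrow> nat \<Rightarrow> real mat \<Rightarrow> real \<Rightarrow> (real vec \<Rightarrow> real vec \<Rightarrow> real) \<Rightarrow> enat
     \<Rightarrow> (nat \<Rightarrow> nat \<Rightarrow> real) \<Rightarrow> nat \<Rightarrow> (nat \<Rightarrow> nat \<Rightarrow> real) \<Rightarrow> real mat" where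
  "Kmem nx nu X sn k mb u t h =
     (let ml = mem_len mb t;
          Xi = map (\<lambda>j. xi_of nx nu (h j) (u j)) [t - ml..<t];
          XD = cols X
      in four_block_mat (gram k XD XD + sn\<^sup>2 \<cdot>\<^sub>m 1\<^sub>m (length XD)) (gram k XD Xi)
                        (gram k Xi XD) (gram k Xi Xi))"

definition Xmem :: "nat \<Rightarrow> nat \<Rightarrow> real mat \<Rightarrow> enat
     \<Rightarrow> (nat \<Rightarrow> nat \<Rightarrow> real) \<Rightarrow> nat \<Rightarrow> (nat \<Rightarrow> nat \<Rightarrow> real) \<Rightarrow> real vec list" where
  "Xmem nx nu X mb u t h =
     (let ml = mem_len mb t
      in cols X @ map (\<lambda>j. xi_of nx nu (h j) (u j)) [t - ml..<t])"

definition Ymem_col :: "real mat \<Rightarrow> enat \<Rightarrow> nat \<Rightarrow> (nat \<Rightarrow> nat \<Rightarrow> real) \<Rightarrow> nat \<Rightarrow> real vec" where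
  "Ymem_col Y mb t h i =
     (let ml = mem_len mb t; nD = dim_row Y
      in vec (nD + ml) (\<lambda>r. if r < nD then Y $$ (r, i) else h (t - ml + 1 + (r - nD)) i))"

text \<open>Posterior mean f_t (componentwise) and posterior variance (common diagonal entry of F_t).\<close>
definition fmean :: "nat \<Rightarrow> nat \<Rightarrow> real mat \<Rightarrow> real mat \<Rightarrow> real \<Rightarrow> (real vec \<Rightarrow> real vec \<Rightarrow> real)
     \<Rightarrow> (real vec \<Rightarrow> real) \<Rightarrow> enat \<Rightarrow> (nat \<Rightarrow> nat \<Rightarrow> real) \<Rightarrow> nat \<Rightarrow> (nat \<Rightarrow> nat \<Rightarrow> real) \<Rightarrow> nat \<Rightarrow> real" where
  "fmean nx nu X Y sn k mf mb u t h i =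
     (let z = xi_of nx nu (h t) (u t); XM = Xmem nx nu X mb u t h
      in mf z + kvec k z XM \<bullet> (pinv (Kmem nx nu X sn k mb u t h) *\<^sub>v (Ymem_col Y mb t h i - mvec mf XM)))"

definition fvar :: "nat \<Rightarrow> nat \<Rightarrow> real mat \<Rightarrow> real \<Rightarrow> (real vec \<Rightarrow> real vec \<Rightarrow> real)
     \<Rightarrow> enat \<Rightarrow> (nat \<Rightarrow> nat \<Rightarrow> real) \<Rightarrow> nat \<Rightarrow> (nat \<Rightarrow> nat \<Rightarrow> real) \<Rightarrow> real" where
  "fvar nx nu X sn k mb u t h =
     (let z = xi_of nx nu (h t) (u t); XM = Xmem nx nu X mb u t h
      in k z z - kvec k z XM \<bullet> (pinv (Kmem nx nu X sn k mb u t h) *\<^sub>v kvec k z XM))"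

definition normal1 :: "real \<Rightarrow> real \<Rightarrow> real measure" where
  "normal1 mu v = (if v \<le> 0 then return borel mu else density lborel (normal_density mu (sqrt v)))"

definition state_space :: "nat \<Rightarrow> (nat \<Rightarrow> real) measure" where
  "state_space nx = PiM {..<nx} (\<lambda>_. borel)"

definition hist_space :: "nat \<Rightarrow> nat \<Rightarrow> (nat \<Rightarrow> nat \<Rightarrow> real) measure" where
  "hist_space nx t = PiM {..t} (\<lambda>_. state_space nx)"

definition gauss_diag :: "nat \<Rightarrow> (nat \<Rightarrow> real) \<Rightarrow> real \<Rightarrow> (nat \<Rightarrow> real) measure" where
  "gauss_diag nx mu v = PiM {..<nx} (\<lambda>i. normal1 (mu i) v)"

definition gp_kernel :: "nat \<Rightarrow> nat \<Rightarrow> real mat \<Rightarrow> real mat \<Rightarrow> real \<Rightarrow> (real vec \<Rightarrow> real vec \<Rightarrow> real)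
     \<Rightarrow> (real vec \<Rightarrow> real) \<Rightarrow> enat \<Rightarrow> (nat \<Rightarrow> nat \<Rightarrow> real) \<Rightarrow> nat \<Rightarrow> (nat \<Rightarrow> nat \<Rightarrow> real) \<Rightarrow> (nat \<Rightarrow> real) measure" where
  "gp_kernel nx nu X Y sn k mf mb u t h =
     gauss_diag nx (fmean nx nu X Y sn k mf mb u t h) (fvar nx nu X sn k mb u t h)"

fun gp_hist :: "nat \<Rightarrow> nat \<Rightarrow> real mat \<Rightarrow> real mat \<Rightarrow> real \<Rightarrow> (real vec \<Rightarrow> real vec \<Rightarrow> real)
     \<Rightarrow> (real vec \<Rightarrow> real) \<Rightarrow> enat \<Rightarrow> (nat \<Rightarrow> nat \<Rightarrow> real) \<Rightarrow> (nat \<Rightarrow> real) \<Rightarrow> nat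
     \<Rightarrow> (nat \<Rightarrow> nat \<Rightarrow> real) measure" where
  "gp_hist nx nu X Y sn k mf mb u x0 0 =
     return (hist_space nx 0) (\<lambda>j\<in>{..0}. restrict x0 {..<nx})"
| "gp_hist nx nu X Y sn k mf mb u x0 (Suc t) =
     gp_hist nx nu X Y sn k mf mb u x0 t \<bind>
       (\<lambda>h. distr (gp_kernel nx nu X Y sn k mf mb u t h) (hist_space nx (Suc t)) (\<lambda>x. h(Suc t := x)))"

definition gp_moment :: "nat \<Rightarrow> nat \<Rightarrow> real mat \<Rightarrow> real mat \<Rightarrow> real \<Rightarrow> (real vec \<Rightarrow> real vec \<Rightarrow> real)
     \<Rightarrow> (real vec \<Rightarrow> real) \<Rightarrow> enat \<Rightarrow> (nat \<Rightarrow> nat \<Rightarrow> real) \<Rightarrow> (nat \<Rightarrow> real) \<Rightarrow> nat \<Rightarrow> nat \<Rightarrow> ennreal" where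
  "gp_moment nx nu X Y sn k mf mb u x0 p t =
     (\<integral>\<^sup>+ h. ennreal ((sqrt (\<Sum>i<nx. (h t i)\<^sup>2)) ^ p) \<partial>(gp_hist nx nu X Y sn k mf mb u x0 t))"

definition gp_wellposed :: "nat \<Rightarrow> nat \<Rightarrow> real mat \<Rightarrow> real mat \<Rightarrow> real \<Rightarrow> (real vec \<Rightarrow> real vec \<Rightarrow> real)
     \<Rightarrow> (real vec \<Rightarrow> real) \<Rightarrow> enat \<Rightarrow> (nat \<Rightarrow> nat \<Rightarrow> real) \<Rightarrow> bool" where
  "gp_wellposed nx nu X Y sn k mf mb u \<longleftrightarrow>
     (\<forall>t. gp_kernel nx nu X Y sn k mf mb u t \<in> hist_space nx t \<rightarrow>\<^sub>M prob_algebra (state_space nx))"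

end

theory Submission
  imports Defs
begin


lemma mp_unique:
  fixes A B C :: "real mat"
  assumes A: "A \<in> carrier_mat n m" and B: "B \<in> carrier_mat m n" and C: "C \<in> carrier_mat m n"
    and b1: "A * B * A = A" and b2: "B * A * B = B" and b3: "transpose_mat (A * B) = A * B"
    and b4: "transpose_mat (B * A) = B * A"
    and c1: "A * C * A = A" and c2: "C * A * C = C" and c3: "transpose_mat (A * C) = A * C"
    and c4: "transpose_mat (C * A) = C * A"
  shows "B = C"
proof -
  have AB: "A * B \<in> carrier_mat n n" "A * C \<in> carrier_mat n n" using A B C by auto
  have BA: "B * A \<in> carrier_mat m m" "C * A \<in> carrier_mat m m" using A B C by auto
  have tA: "transpose_mat A \<in> carrier_mat m n" and tB: "transpose_mat B \<in> carrier_mat n m"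
    and tC: "transpose_mat C \<in> carrier_mat n m" using A B C by auto
  have e1: "A * B = A * C"
  proof -
    have "A * B = (A * C * A) * B" using c1 by simp
    also have "\<dots> = (A * C) * (A * B)" using A B C by (metis assoc_mult_mat mult_carrier_mat)
    also have "\<dots> = transpose_mat (A * C) * transpose_mat (A * B)" using b3 c3 by simp
    also have "\<dots> = transpose_mat ((A * B) * (A * C))" using AB by (simp add: transpose_mult[of _ n n _ n])
    also have "(A * B) * (A * C) = (A * B * A) * C" using A B C by (metis assoc_mult_mat mult_carrier_mat)
    also have "\<dots> = A * C" using b1 by simp
    finally show ?thesis using c3 by simp
  qed
  have e2: "B * A = C * A"
  proof -
    have "B * A = B * (A * C * A)" using c1 by simp
    also have "\<dots> = (B * A) * (C * A)" using A B C by (metis assoc_mult_mat mult_carrier_mat)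
    also have "\<dots> = transpose_mat (B * A) * transpose_mat (C * A)" using b4 c4 by simp
    also have "\<dots> = transpose_mat ((C * A) * (B * A))" using BA by (simp add: transpose_mult[of _ m m _ m])
    also have "(C * A) * (B * A) = C * (A * B * A)" using A B C by (metis assoc_mult_mat mult_carrier_mat)
    also have "\<dots> = C * A" using b1 by simp
    finally show ?thesis using c4 by simp
  qed
  have "B = B * A * B" using b2 by simp
  also have "\<dots> = B * (A * C)" using A B C e1 by (metis assoc_mult_mat)
  also have "\<dots> = (B * A) * C" using A B C by (metis assoc_mult_mat)
  also have "\<dots> = (C * A) * C" using e2 by simp
  also have "\<dots> = C" using c2 by simp
  finally show ?thesis .
qed

lemma pinv_eqI:
  assumes A: "A \<in> carrier_mat n m" and B: "B \<in> carrier_mat m n"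
    and b1: "A * B * A = A" and b2: "B * A * B = B" and b3: "transpose_mat (A * B) = A * B"
    and b4: "transpose_mat (B * A) = B * A"
  shows "pinv A = B"
  unfolding pinv_def
proof (rule the_equality)
  show "B \<in> carrier_mat (dim_col A) (dim_row A) \<and> A * B * A = A \<and> B * A * B = B \<and>
      transpose_mat (A * B) = A * B \<and> transpose_mat (B * A) = B * A" using assms by auto
next
  fix C assume "C \<in> carrier_mat (dim_col A) (dim_row A) \<and> A * C * A = A \<and> C * A * C = C \<and>
      transpose_mat (A * C) = A * C \<and> transpose_mat (C * A) = C * A"
  then show "C = B" using mp_unique[OF A B, of C] assms by auto
qed

definition outer :: "real vec \<Rightarrow> real mat" where
  "outer v = mat (dim_vec v) (dim_vec v) (\<lambda>(i,j). v $ i * v $ j)"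

lemma outer_carrier[simp]: "outer v \<in> carrier_mat (dim_vec v) (dim_vec v)"
  by (simp add: outer_def)

lemma smult_smult_mat: "a \<cdot>\<^sub>m (b \<cdot>\<^sub>m (A :: real mat)) = (a * b) \<cdot>\<^sub>m A"
  by (rule eq_matI) auto

lemma one_smult_mat[simp]: "(1::real) \<cdot>\<^sub>m A = A"
  by (rule eq_matI) auto

lemma transpose_smult_mat: "transpose_mat (a \<cdot>\<^sub>m (A::real mat)) = a \<cdot>\<^sub>m transpose_mat A"
  by (rule eq_matI) auto

lemma smult_mat_mult_vec: "v \<in> carrier_vec (dim_col A) \<Longrightarrow> (a \<cdot>\<^sub>m (A :: real mat)) *\<^sub>v v = a \<cdot>\<^sub>v (A *\<^sub>v v)"
  by (rule eq_vecI) (auto simp: scalar_prod_def sum_distrib_left mult_ac)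

lemma outer_mult_outer: "outer v * outer v = (v \<bullet> v) \<cdot>\<^sub>m outer v"
proof (rule eq_matI)
  fix i j assume i: "i < dim_row ((v \<bullet> v) \<cdot>\<^sub>m outer v)" and j: "j < dim_col ((v \<bullet> v) \<cdot>\<^sub>m outer v)"
  then have i': "i < dim_vec v" and j': "j < dim_vec v" by (auto simp: outer_def)
  have "(outer v * outer v) $$ (i, j) = (\<Sum>k = 0..<dim_vec v. (v $ i * v $ k) * (v $ k * v $ j))"
    using i' j' by (simp add: outer_def scalar_prod_def)
  also have "\<dots> = (\<Sum>k = 0..<dim_vec v. (v $ k * v $ k) * (v $ i * v $ j))"
    by (rule sum.cong) (auto simp: mult_ac)
  also have "\<dots> = (\<Sum>k = 0..<dim_vec v. v $ k * v $ k) * (v $ i * v $ j)"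
    by (simp add: sum_distrib_right)
  finally show "(outer v * outer v) $$ (i, j) = ((v \<bullet> v) \<cdot>\<^sub>m outer v) $$ (i, j)"
    using i' j' by (simp add: outer_def scalar_prod_def)
qed (auto simp: outer_def)

lemma transpose_outer: "transpose_mat (outer v) = outer v"
  by (rule eq_matI) (auto simp: outer_def)

lemma outer_mult_vec: "w \<in> carrier_vec (dim_vec v) \<Longrightarrow> outer v *\<^sub>v w = (v \<bullet> w) \<cdot>\<^sub>v v"
  by (rule eq_vecI) (auto simp: outer_def scalar_prod_def sum_distrib_left algebra_simps)

lemma self_scalar_zero: "v \<bullet> v = (0::real) \<Longrightarrow> outer v = 0\<^sub>m (dim_vec v) (dim_vec v)"
proof -
  assume h: "v \<bullet> v = 0"
  have "\<forall>i\<in>{0..<dim_vec v}. v $ i * v $ i = 0"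
    using h unfolding scalar_prod_def by (subst (asm) sum_nonneg_eq_0_iff) auto
  then have "\<And>i. i < dim_vec v \<Longrightarrow> v $ i = 0" by auto
  then show ?thesis by (intro eq_matI) (auto simp: outer_def)
qed

lemma pinv_outer: "pinv (outer v) = (1 / (v \<bullet> v)\<^sup>2) \<cdot>\<^sub>m outer v"
proof (cases "v \<bullet> v = 0")
  case True
  then show ?thesis using self_scalar_zero[OF True]
    by (intro pinv_eqI[of _ "dim_vec v" "dim_vec v"]) auto
next
  case False
  let ?A = "outer v" and ?c = "1 / (v \<bullet> v)\<^sup>2" and ?n = "dim_vec v"
  have A: "?A \<in> carrier_mat ?n ?n" by simp
  have AB: "?A * (?c \<cdot>\<^sub>m ?A) = (?c * (v \<bullet> v)) \<cdot>\<^sub>m ?A"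
    using A by (simp add: mult_smult_distrib[OF A A] outer_mult_outer smult_smult_mat)
  have BA: "(?c \<cdot>\<^sub>m ?A) * ?A = (?c * (v \<bullet> v)) \<cdot>\<^sub>m ?A"
    using A by (simp add: mult_smult_assoc_mat[OF A A] outer_mult_outer smult_smult_mat)
  show ?thesis
  proof (rule pinv_eqI[OF A])
    show "?c \<cdot>\<^sub>m ?A \<in> carrier_mat ?n ?n" by simp
    have "?A * (?c \<cdot>\<^sub>m ?A) * ?A = ((?c * (v \<bullet> v)) \<cdot>\<^sub>m ?A) * ?A" by (simp only: AB)
    also have "\<dots> = (?c * (v \<bullet> v) * (v \<bullet> v)) \<cdot>\<^sub>m ?A"
      by (simp add: mult_smult_assoc_mat[OF A A] outer_mult_outer smult_smult_mat)
    also have "?c * (v \<bullet> v) * (v \<bullet> v) = 1" using False by (simp add: power2_eq_square)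
    finally show "?A * (?c \<cdot>\<^sub>m ?A) * ?A = ?A" by simp
    have "(?c \<cdot>\<^sub>m ?A) * ?A * (?c \<cdot>\<^sub>m ?A) = ((?c * (v \<bullet> v)) \<cdot>\<^sub>m ?A) * (?c \<cdot>\<^sub>m ?A)" by (simp only: BA)
    also have "\<dots> = (?c * (v \<bullet> v)) \<cdot>\<^sub>m (?A * (?c \<cdot>\<^sub>m ?A))"
      by (rule mult_smult_assoc_mat[OF A, of _ "dim_vec v"]) simp
    also have "\<dots> = (?c * (v \<bullet> v)) \<cdot>\<^sub>m ((?c * (v \<bullet> v)) \<cdot>\<^sub>m ?A)" by (simp only: AB)
    also have "\<dots> = (?c * (v \<bullet> v) * (?c * (v \<bullet> v))) \<cdot>\<^sub>m ?A" by (simp add: smult_smult_mat)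
    also have "?c * (v \<bullet> v) * (?c * (v \<bullet> v)) = ?c" using False by (simp add: power2_eq_square)
    finally show "(?c \<cdot>\<^sub>m ?A) * ?A * (?c \<cdot>\<^sub>m ?A) = ?c \<cdot>\<^sub>m ?A" .
    show "transpose_mat (?A * (?c \<cdot>\<^sub>m ?A)) = ?A * (?c \<cdot>\<^sub>m ?A)"
      by (simp add: AB transpose_outer transpose_smult_mat)
    show "transpose_mat ((?c \<cdot>\<^sub>m ?A) * ?A) = (?c \<cdot>\<^sub>m ?A) * ?A"
      by (simp add: BA transpose_outer transpose_smult_mat)
  qed
qed



definition cntT :: "nat \<Rightarrow> nat \<Rightarrow> nat" where
  "cntT T t = (\<Sum>s<t. if s mod T = 0 then 1 else 0)"
definition lamT :: "nat \<Rightarrow> nat \<Rightarrow> real" where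
  "lamT T s = (if s mod T = 0 then 1 / (real (cntT T s) + 1) else 0)"
definition kernT :: "nat \<Rightarrow> real vec \<Rightarrow> real vec \<Rightarrow> real" where
  "kernT T a b = lamT T (nat \<lfloor>a $ 1\<rfloor>) * lamT T (nat \<lfloor>b $ 1\<rfloor>)"
definition mfun :: "real vec \<Rightarrow> real" where
  "mfun a = a $ 0"
definition uu :: "nat \<Rightarrow> nat \<Rightarrow> real" where
  "uu j = (\<lambda>_. real j)"
definition XX :: "real mat" where "XX = 0\<^sub>m 2 0"
definition YY :: "real mat" where "YY = 0\<^sub>m 0 1"

lemma xi_of_1[simp]: "xi_of (Suc 0) (Suc 0) x (uu j) $ Suc 0 = real j"
  by (simp add: xi_of_def uu_def)
lemma xi_of_0[simp]: "xi_of (Suc 0) (Suc 0) x (uu j) $ 0 = x 0"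
  by (simp add: xi_of_def uu_def)
lemma kernT_xi[simp]: "kernT T (xi_of (Suc 0) (Suc 0) x (uu i)) (xi_of (Suc 0) (Suc 0) y (uu j)) = lamT T i * lamT T j"
  by (simp add: kernT_def)
lemma mfun_xi[simp]: "mfun (xi_of (Suc 0) (Suc 0) x (uu i)) = x 0"
  by (simp add: mfun_def)

lemma mem_len_le: "mem_len mb t \<le> t"
  unfolding mem_len_def by (cases mb) auto

lemma cols_XX[simp]: "cols XX = []"
  by (simp add: XX_def cols_def)

lemma four_block_zero:
  assumes "A \<in> carrier_mat 0 0" "B \<in> carrier_mat 0 n" "C \<in> carrier_mat n 0" "D \<in> carrier_mat n n"
  shows "four_block_mat A B C D = D"
  using assms by (intro eq_matI) (auto simp: index_mat_four_block)

definition vvT :: "nat \<Rightarrow> enat \<Rightarrow> nat \<Rightarrow> real vec" where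
  "vvT T mb t = vec (mem_len mb t) (\<lambda>r. lamT T (t - mem_len mb t + r))"

definition yyT :: "enat \<Rightarrow> nat \<Rightarrow> (nat \<Rightarrow> nat \<Rightarrow> real) \<Rightarrow> real vec" where
  "yyT mb t h = vec (mem_len mb t) (\<lambda>r. h (t - mem_len mb t + 1 + r) 0 - h (t - mem_len mb t + r) 0)"

lemma outer_index: "i < dim_vec v \<Longrightarrow> j < dim_vec v \<Longrightarrow> outer v $$ (i, j) = v $ i * v $ j"
  by (simp add: outer_def)

lemma dim_outer[simp]: "dim_row (outer v) = dim_vec v" "dim_col (outer v) = dim_vec v"
  by (auto simp: outer_def)

lemma gram_Xi: "gram (kernT T) (map (\<lambda>j. xi_of (Suc 0) (Suc 0) (h j) (uu j)) [t - ml..<t])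
      (map (\<lambda>j. xi_of (Suc 0) (Suc 0) (h j) (uu j)) [t - ml..<t]) =
    outer (vec ml (\<lambda>r. lamT T (t - ml + r)))" if "ml \<le> t"
proof (rule eq_matI)
  show "dim_row (gram (kernT T) (map (\<lambda>j. xi_of (Suc 0) (Suc 0) (h j) (uu j)) [t - ml..<t])
      (map (\<lambda>j. xi_of (Suc 0) (Suc 0) (h j) (uu j)) [t - ml..<t])) = dim_row (outer (vec ml (\<lambda>r. lamT T (t - ml + r))))"
    using that by (simp add: gram_def outer_def)
  show "dim_col (gram (kernT T) (map (\<lambda>j. xi_of (Suc 0) (Suc 0) (h j) (uu j)) [t - ml..<t])
      (map (\<lambda>j. xi_of (Suc 0) (Suc 0) (h j) (uu j)) [t - ml..<t])) = dim_col (outer (vec ml (\<lambda>r. lamT T (t - ml + r))))"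
    using that by (simp add: gram_def outer_def)
  fix i j assume "i < dim_row (outer (vec ml (\<lambda>r. lamT T (t - ml + r))))"
    "j < dim_col (outer (vec ml (\<lambda>r. lamT T (t - ml + r))))"
  then have i: "i < ml" and j: "j < ml" by (auto simp: outer_def)
  show "gram (kernT T) (map (\<lambda>j. xi_of (Suc 0) (Suc 0) (h j) (uu j)) [t - ml..<t])
      (map (\<lambda>j. xi_of (Suc 0) (Suc 0) (h j) (uu j)) [t - ml..<t]) $$ (i, j) =
    outer (vec ml (\<lambda>r. lamT T (t - ml + r))) $$ (i, j)"
  proof -
    have li: "[t - ml..<t] ! i = t - ml + i" "[t - ml..<t] ! j = t - ml + j" using that i j by auto
    have "gram (kernT T) (map (\<lambda>j. xi_of (Suc 0) (Suc 0) (h j) (uu j)) [t - ml..<t])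
      (map (\<lambda>j. xi_of (Suc 0) (Suc 0) (h j) (uu j)) [t - ml..<t]) $$ (i, j) =
       kernT T (xi_of (Suc 0) (Suc 0) (h (t - ml + i)) (uu (t - ml + i)))
               (xi_of (Suc 0) (Suc 0) (h (t - ml + j)) (uu (t - ml + j)))"
      unfolding gram_def using that i j by (simp only: li length_map length_upt index_mat nth_map) simp
    also have "\<dots> = lamT T (t - ml + i) * lamT T (t - ml + j)" by (rule kernT_xi)
    also have "\<dots> = outer (vec ml (\<lambda>r. lamT T (t - ml + r))) $$ (i, j)"
      using i j by (simp add: outer_index)
    finally show ?thesis .
  qed
qed

lemma Kmem_eq: "Kmem (Suc 0) (Suc 0) XX 1 (kernT T) mb uu t h = outer (vvT T mb t)"
proof -
  let ?ml = "mem_len mb t"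
  let ?Xi = "map (\<lambda>j. xi_of (Suc 0) (Suc 0) (h j) (uu j)) [t - ?ml..<t]"
  have le: "?ml \<le> t" by (rule mem_len_le)
  have "Kmem (Suc 0) (Suc 0) XX 1 (kernT T) mb uu t h =
     four_block_mat (gram (kernT T) [] [] + 1\<^sup>2 \<cdot>\<^sub>m 1\<^sub>m 0) (gram (kernT T) [] ?Xi)
                        (gram (kernT T) ?Xi []) (gram (kernT T) ?Xi ?Xi)"
    unfolding Kmem_def Let_def cols_XX by simp
  also have "\<dots> = gram (kernT T) ?Xi ?Xi"
    by (rule four_block_zero[where n = ?ml]) (use le in \<open>auto simp: gram_def\<close>)
  also have "\<dots> = outer (vvT T mb t)" unfolding vvT_def by (rule gram_Xi[OF le])
  finally show ?thesis .
qed

lemma Xmem_eq: "Xmem (Suc 0) (Suc 0) XX mb uu t h = map (\<lambda>j. xi_of (Suc 0) (Suc 0) (h j) (uu j)) [t - mem_len mb t..<t]"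
  by (simp add: Xmem_def Let_def)

lemma kvec_eq: "kvec (kernT T) (xi_of (Suc 0) (Suc 0) (h t) (uu t)) (Xmem (Suc 0) (Suc 0) XX mb uu t h) = lamT T t \<cdot>\<^sub>v vvT T mb t"
  using mem_len_le[of mb t] by (auto simp: Xmem_eq kvec_def vvT_def intro!: eq_vecI)

lemma Ymc_eq: "Ymem_col YY mb t h 0 - mvec mfun (Xmem (Suc 0) (Suc 0) XX mb uu t h) = yyT mb t h"
  using mem_len_le[of mb t] by (auto simp: Xmem_eq Ymem_col_def YY_def mvec_def yyT_def Let_def intro!: eq_vecI)

lemma dim_vvT[simp]: "dim_vec (vvT T mb t) = mem_len mb t" by (simp add: vvT_def)
lemma dim_yyT[simp]: "dim_vec (yyT mb t h) = mem_len mb t" by (simp add: yyT_def)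

lemma fmean_eq: "fmean (Suc 0) (Suc 0) XX YY 1 (kernT T) mfun mb uu t h 0 =
   h t 0 + lamT T t * (vvT T mb t \<bullet> yyT mb t h) / (vvT T mb t \<bullet> vvT T mb t)"
proof -
  let ?v = "vvT T mb t" and ?y = "yyT mb t h"
  have "fmean (Suc 0) (Suc 0) XX YY 1 (kernT T) mfun mb uu t h 0 =
     h t 0 + (lamT T t \<cdot>\<^sub>v ?v) \<bullet> ((1 / (?v \<bullet> ?v)\<^sup>2) \<cdot>\<^sub>v ((?v \<bullet> ?y) \<cdot>\<^sub>v ?v))"
  proof -
    have y: "?y \<in> carrier_vec (dim_vec ?v)" by (simp add: carrier_vecI)
    have e: "((1 / (?v \<bullet> ?v)\<^sup>2) \<cdot>\<^sub>m outer ?v) *\<^sub>v ?y = (1 / (?v \<bullet> ?v)\<^sup>2) \<cdot>\<^sub>v ((?v \<bullet> ?y) \<cdot>\<^sub>v ?v)"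
      using y by (subst smult_mat_mult_vec) (auto simp: outer_mult_vec)
    show ?thesis
      unfolding fmean_def Let_def kvec_eq Ymc_eq Kmem_eq pinv_outer e mfun_xi ..
  qed
  also have "\<dots> = h t 0 + lamT T t * (1 / (?v \<bullet> ?v)\<^sup>2) * (?v \<bullet> ?y) * (?v \<bullet> ?v)"
    by (simp add: scalar_prod_smult_left scalar_prod_smult_right)
  also have "\<dots> = h t 0 + lamT T t * (?v \<bullet> ?y) / (?v \<bullet> ?v)"
    by (cases "?v \<bullet> ?v = 0") (auto simp: power2_eq_square field_simps)
  finally show ?thesis .
qed

lemma fvar_eq: "fvar (Suc 0) (Suc 0) XX 1 (kernT T) mb uu t h =
   (if vvT T mb t \<bullet> vvT T mb t = 0 then (lamT T t)\<^sup>2 else 0)"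
proof -
  let ?v = "vvT T mb t"
  have "fvar (Suc 0) (Suc 0) XX 1 (kernT T) mb uu t h =
     lamT T t * lamT T t - (lamT T t \<cdot>\<^sub>v ?v) \<bullet> ((1 / (?v \<bullet> ?v)\<^sup>2) \<cdot>\<^sub>v ((?v \<bullet> (lamT T t \<cdot>\<^sub>v ?v)) \<cdot>\<^sub>v ?v))"
  proof -
    have y: "lamT T t \<cdot>\<^sub>v ?v \<in> carrier_vec (dim_vec ?v)" by (simp add: carrier_vecI)
    have e: "((1 / (?v \<bullet> ?v)\<^sup>2) \<cdot>\<^sub>m outer ?v) *\<^sub>v (lamT T t \<cdot>\<^sub>v ?v) = (1 / (?v \<bullet> ?v)\<^sup>2) \<cdot>\<^sub>v ((?v \<bullet> (lamT T t \<cdot>\<^sub>v ?v)) \<cdot>\<^sub>v ?v)"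
      using y by (subst smult_mat_mult_vec) (auto simp: outer_mult_vec)
    show ?thesis
      unfolding fvar_def Let_def kvec_eq Kmem_eq pinv_outer e kernT_xi ..
  qed
  also have "\<dots> = lamT T t * lamT T t - lamT T t * (1 / (?v \<bullet> ?v)\<^sup>2) * (lamT T t * (?v \<bullet> ?v)) * (?v \<bullet> ?v)"
    by (simp add: scalar_prod_smult_left scalar_prod_smult_right)
  also have "\<dots> = (if ?v \<bullet> ?v = 0 then (lamT T t)\<^sup>2 else 0)"
    by (cases "?v \<bullet> ?v = 0") (auto simp: power2_eq_square field_simps)
  finally show ?thesis .
qed



lemma sum_split_add_nat: fixes f :: "nat \<Rightarrow> 'a::comm_monoid_add"
  shows "(\<Sum>s<a + b. f s) = (\<Sum>s<a. f s) + (\<Sum>i<b. f (a + i))"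
  by (induction b) (auto simp: add.assoc)

lemma cntT_Suc: "cntT T (Suc t) = cntT T t + (if t mod T = 0 then 1 else 0)"
  by (simp add: cntT_def)

lemma cntT_mult:
  assumes T: "T > 0" shows "cntT T (T * k) = k"
proof (induction k)
  case 0 then show ?case by (simp add: cntT_def)
next
  case (Suc k)
  have "cntT T (T * Suc k) = cntT T (T * k + T)" by (simp add: add.commute)
  also have "\<dots> = cntT T (T * k) + (\<Sum>i<T. if (T * k + i) mod T = 0 then 1 else 0)"
    unfolding cntT_def by (rule sum_split_add_nat)
  also have "(\<Sum>i<T. if (T * k + i) mod T = 0 then 1 else 0) = (\<Sum>i<T. if i = 0 then 1 else (0::nat))"
    by (rule sum.cong) auto
  also have "\<dots> = 1" using T by simp
  finally show ?case using Suc by simp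
qed

definition Hs :: "nat \<Rightarrow> nat \<Rightarrow> real" where "Hs T t = (\<Sum>s<t. lamT T s)"
definition Sq :: "nat \<Rightarrow> nat \<Rightarrow> real" where "Sq T t = (\<Sum>s<t. (lamT T s)\<^sup>2)"

lemma Hs_harm: "Hs T t = harm (cntT T t)"
proof (induction t)
  case 0 then show ?case by (simp add: Hs_def cntT_def harm_expand)
next
  case (Suc t)
  then show ?case
    by (auto simp: Hs_def cntT_Suc lamT_def harm_Suc field_simps)
qed

lemma Sq_bound: "Sq T t \<le> 2 - 2 / (real (cntT T t) + 1)"
proof (induction t)
  case 0 then show ?case by (simp add: Sq_def cntT_def)
next
  case (Suc t)
  let ?c = "real (cntT T t)"
  show ?case
  proof (cases "t mod T = 0")
    case True
    have "Sq T (Suc t) = Sq T t + 1 / (?c + 1)\<^sup>2" using True by (simp add: Sq_def lamT_def power_divide)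
    also have "\<dots> \<le> 2 - 2 / (?c + 1) + 1 / (?c + 1)\<^sup>2" using Suc by simp
    also have "\<dots> \<le> 2 - 2 / (?c + 2)"
    proof -
      have c0: "?c \<ge> 0" by simp
      have m: "(?c+1)*(?c+2) \<le> (?c+1)*(2*?c+2)" by (rule mult_left_mono) (use c0 in auto)
      have e0: "(?c+1)*(2*?c+2) = 2*(?c+1)\<^sup>2" by (simp add: power2_eq_square algebra_simps)
      have e1: "1 / (?c + 1)\<^sup>2 = 2 / ((?c+1)*(2*?c+2))" unfolding e0 by simp
      have e2: "2 / (?c + 1) - 2 / (?c + 2) = 2 / ((?c+1)*(?c+2))" by (simp add: field_simps)
      have "2 / ((?c+1)*(2*?c+2)) \<le> 2 / ((?c+1)*(?c+2))"
        by (rule divide_left_mono[OF m]) (use c0 in auto)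
      then have "1 / (?c + 1)\<^sup>2 \<le> 2 / (?c + 1) - 2 / (?c + 2)" using e1 e2 by simp
      then show ?thesis by simp
    qed
    finally show ?thesis using True by (simp add: cntT_Suc add.commute)
  next
    case False
    then show ?thesis using Suc by (simp add: Sq_def lamT_def cntT_Suc)
  qed
qed

lemma Sq_le2: "Sq T t \<le> 2"
  using Sq_bound[of T t] by (smt (verit) divide_nonneg_nonneg of_nat_0_le_iff)

lemma Hs_unbounded: assumes "T > 0" shows "ln (real k + 2) \<le> Hs T (T * k + 1)"
proof -
  have "cntT T (T * k + 1) = Suc k" using cntT_mult[OF assms, of k] by (simp add: cntT_Suc)
  then show ?thesis using harm_ge_ln[of "Suc k"] by (simp add: Hs_harm add.commute)
qed

lemma Hs_Suc: "Hs T (Suc t) = Hs T t + lamT T t" by (simp add: Hs_def)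

lemma lamT_nonneg: "lamT T s \<ge> 0" by (simp add: lamT_def)

lemma lamT_pos: "s mod T = 0 \<Longrightarrow> lamT T s > 0" by (simp add: lamT_def)

lemma not_mult_window:
  fixes T t w :: nat
  assumes "T > 0" "t mod T = 0" "w < t" "t - w < T" shows "w mod T \<noteq> 0"
proof
  assume "w mod T = 0"
  then have "T dvd (t - w)" using assms by (simp add: dvd_diff_nat mod_0_imp_dvd)
  then have "T \<le> t - w" using assms by (intro dvd_imp_le) auto
  then show False using assms by simp
qed

lemma self_scalar_nonneg: "(v::real vec) \<bullet> v \<ge> 0"
  unfolding scalar_prod_def by (intro sum_nonneg) auto

lemma self_scalar_ge: "i < dim_vec v \<Longrightarrow> (v $ i)\<^sup>2 \<le> (v::real vec) \<bullet> v"
  unfolding scalar_prod_def power2_eq_square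
  by (rule member_le_sum[of i "{0..<dim_vec v}" "\<lambda>i. v $ i * v $ i"]) auto

text \<open>Short memory: window never contains multiples of T.\<close>
lemma short_vv_zero:
  assumes "t mod Suc m = 0"
  shows "vvT (Suc m) (enat m) t \<bullet> vvT (Suc m) (enat m) t = 0"
proof -
  have "\<And>r. r < mem_len (enat m) t \<Longrightarrow> lamT (Suc m) (t - mem_len (enat m) t + r) = 0"
  proof -
    fix r assume r: "r < mem_len (enat m) t"
    have ml: "mem_len (enat m) t \<le> m" "mem_len (enat m) t \<le> t"
      unfolding mem_len_def by auto
    have "(t - mem_len (enat m) t + r) mod Suc m \<noteq> 0"
      by (rule not_mult_window[OF _ assms]) (use r ml in auto)
    then show "lamT (Suc m) (t - mem_len (enat m) t + r) = 0" by (simp add: lamT_def)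
  qed
  then show ?thesis unfolding scalar_prod_def vvT_def by simp
qed

lemma short_fmean: "fmean (Suc 0) (Suc 0) XX YY 1 (kernT (Suc m)) mfun (enat m) uu t h 0 = h t 0"
  unfolding fmean_eq
  by (cases "t mod Suc m = 0") (auto simp: short_vv_zero lamT_def)

lemma short_fvar: "fvar (Suc 0) (Suc 0) XX 1 (kernT (Suc m)) (enat m) uu t h = (lamT (Suc m) t)\<^sup>2"
  unfolding fvar_eq
  by (cases "t mod Suc m = 0") (auto simp: short_vv_zero lamT_def)

lemma long_vv_pos:
  assumes mb: "enat m < mb'" and t: "t mod Suc m = 0" "t \<ge> Suc m"
  shows "vvT (Suc m) mb' t \<bullet> vvT (Suc m) mb' t > 0"
proof -
  let ?ml = "mem_len mb' t"
  have ml: "Suc m \<le> ?ml" "?ml \<le> t"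
  proof -
    show "?ml \<le> t" by (rule mem_len_le)
    show "Suc m \<le> ?ml"
    proof (cases "enat t \<le> mb'")
      case True then show ?thesis using t by (simp add: mem_len_def)
    next
      case False
      from False obtain n where n: "mb' = enat n" by (cases mb') auto
      then show ?thesis using False mb by (simp add: mem_len_def)
    qed
  qed
  let ?r = "?ml - Suc m"
  have idx: "t - ?ml + ?r = t - Suc m" using ml by simp
  have r: "?r < dim_vec (vvT (Suc m) mb' t)" using ml by simp
  have "vvT (Suc m) mb' t $ ?r = lamT (Suc m) (t - Suc m)"
    using r idx by (simp add: vvT_def)
  also have "\<dots> > 0" using t by (intro lamT_pos dvd_imp_mod_0 dvd_diff_nat) (auto simp: mod_0_imp_dvd)
  finally have "0 < (vvT (Suc m) mb' t $ ?r)\<^sup>2" by simp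
  also have "\<dots> \<le> vvT (Suc m) mb' t \<bullet> vvT (Suc m) mb' t" by (rule self_scalar_ge[OF r])
  finally show ?thesis .
qed

lemma mult_ge: "t mod Suc m = 0 \<Longrightarrow> t \<ge> 1 \<Longrightarrow> t \<ge> Suc m"
  by (cases "t < Suc m") auto

lemma long_fvar:
  assumes mb: "enat m < mb'" and t: "t \<ge> 1"
  shows "fvar (Suc 0) (Suc 0) XX 1 (kernT (Suc m)) mb' uu t h = 0"
proof (cases "t mod Suc m = 0")
  case True
  then have "t \<ge> Suc m" using t by (rule mult_ge)
  then show ?thesis unfolding fvar_eq using long_vv_pos[OF mb True] by simp
next
  case False then show ?thesis unfolding fvar_eq by (simp add: lamT_def)
qed

lemma long_fmean:
  assumes mb: "enat m < mb'" and t: "t \<ge> 1"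
    and inv: "\<forall>j\<le>t. h j 0 = Hs (Suc m) j * h 1 0"
  shows "fmean (Suc 0) (Suc 0) XX YY 1 (kernT (Suc m)) mfun mb' uu t h 0 = Hs (Suc m) (Suc t) * h 1 0"
proof (cases "t mod Suc m = 0")
  case True
  let ?v = "vvT (Suc m) mb' t" and ?y = "yyT mb' t h" and ?ml = "mem_len mb' t"
  have tT: "t \<ge> Suc m" using True t by (rule mult_ge)
  have pos: "?v \<bullet> ?v > 0" by (rule long_vv_pos[OF mb True tT])
  have ml: "?ml \<le> t" by (rule mem_len_le)
  have yv: "?y = h 1 0 \<cdot>\<^sub>v ?v"
  proof (rule eq_vecI)
    fix r assume "r < dim_vec (h 1 0 \<cdot>\<^sub>v ?v)"
    then have r: "r < ?ml" by simp
    have a: "t - ?ml + 1 + r = Suc (t - ?ml + r)" by simp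
    have "?y $ r = h (t - ?ml + 1 + r) 0 - h (t - ?ml + r) 0"
      unfolding yyT_def using r by (rule index_vec)
    also have "\<dots> = h (Suc (t - ?ml + r)) 0 - h (t - ?ml + r) 0" by (simp only: a)
    also have "\<dots> = (Hs (Suc m) (Suc (t - ?ml + r)) - Hs (Suc m) (t - ?ml + r)) * h 1 0"
    proof -
      have j1: "Suc (t - ?ml + r) \<le> t" "t - ?ml + r \<le> t" using r ml by linarith+
      have e1: "h (Suc (t - ?ml + r)) 0 = Hs (Suc m) (Suc (t - ?ml + r)) * h 1 0"
        using inv j1(1) by blast
      have e2: "h (t - ?ml + r) 0 = Hs (Suc m) (t - ?ml + r) * h 1 0"
        using inv j1(2) by blast
      show ?thesis by (simp only: e1 e2 left_diff_distrib)
    qed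
    also have "\<dots> = h 1 0 * lamT (Suc m) (t - ?ml + r)" by (simp add: Hs_Suc)
    finally show "?y $ r = (h 1 0 \<cdot>\<^sub>v ?v) $ r" using r by (simp add: vvT_def)
  qed simp
  have "fmean (Suc 0) (Suc 0) XX YY 1 (kernT (Suc m)) mfun mb' uu t h 0
      = h t 0 + lamT (Suc m) t * (?v \<bullet> ?y) / (?v \<bullet> ?v)" by (rule fmean_eq)
  also have "?v \<bullet> ?y = h 1 0 * (?v \<bullet> ?v)" unfolding yv by (simp add: scalar_prod_smult_right)
  also have "h t 0 = Hs (Suc m) t * h 1 0" using inv by blast
  finally show ?thesis using pos by (simp add: Hs_Suc field_simps)
next
  case False
  have "h t 0 = Hs (Suc m) t * h 1 0" using inv by blast
  then show ?thesis using False by (simp add: fmean_eq Hs_Suc lamT_def)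
qed



lemma prob_space_normal1: "prob_space (normal1 mu v)"
  by (simp add: normal1_def prob_space_return prob_space_normal_density)

lemma sets_normal1[measurable_cong, simp]: "sets (normal1 mu v) = sets borel"
  by (simp add: normal1_def)

lemma space_normal1[simp]: "space (normal1 mu v) = UNIV"
  using sets_eq_imp_space_eq[OF sets_normal1] by simp

lemma measurable_normal1_pos:
  assumes v: "v > 0"
  shows "(\<lambda>mu. normal1 mu v) \<in> borel \<rightarrow>\<^sub>M prob_algebra borel"
proof (rule measurable_prob_algebra_generated[where \<Omega> = UNIV and G = "sets borel"])
  show "sets borel = sigma_sets UNIV (sets borel)"
    using sets.sigma_sets_eq[of borel] unfolding space_borel by (rule sym)
  show "Int_stable (sets borel)" by (auto simp: Int_stable_def)
  show "sets borel \<subseteq> Pow UNIV" by simp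
  show "\<And>a. a \<in> space borel \<Longrightarrow> prob_space (normal1 a v)" by (rule prob_space_normal1)
  show "\<And>a. a \<in> space borel \<Longrightarrow> sets (normal1 a v) = sets borel" by simp
  fix A :: "real set" assume A: "A \<in> sets borel"
  have eq: "\<And>a. emeasure (normal1 a v) A = (\<integral>\<^sup>+ x. ennreal (normal_density a (sqrt v) x) * indicator A x \<partial>lborel)"
    using v A by (simp add: normal1_def emeasure_density)
  have "(\<lambda>a. \<integral>\<^sup>+ x. ennreal (normal_density a (sqrt v) x) * indicator A x \<partial>lborel) \<in> borel_measurable borel"
    by (rule sigma_finite_measure.borel_measurable_nn_integral[OF lborel.sigma_finite_measure_axioms])
       (use A in \<open>simp add: normal_density_def[abs_def]\<close>)
  then show "(\<lambda>a. emeasure (normal1 a v) A) \<in> borel_measurable borel" by (simp only: eq)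
qed

lemma measurable_normal1:
  assumes g: "g \<in> M \<rightarrow>\<^sub>M borel"
  shows "(\<lambda>h. normal1 (g h) v) \<in> M \<rightarrow>\<^sub>M prob_algebra borel"
proof (cases "v \<le> 0")
  case True
  have "(\<lambda>h. return borel (g h)) \<in> M \<rightarrow>\<^sub>M prob_algebra borel"
    by (rule measurable_compose[OF g measurable_return_prob_space])
  then show ?thesis using True by (simp add: normal1_def)
next
  case False
  then show ?thesis using measurable_compose[OF g measurable_normal1_pos[of v]] by simp
qed

lemma gauss_diag_1:
  "gauss_diag (Suc 0) mu v = distr (normal1 (mu 0) v) (state_space (Suc 0)) (\<lambda>y. \<lambda>i\<in>{..<Suc 0}. y)"
proof -
  let ?M = "\<lambda>i. normal1 (mu i) v"
  interpret product_sigma_finite ?M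
    unfolding product_sigma_finite_def
    using prob_space_normal1 by (auto intro: prob_space_imp_sigma_finite)
  have I: "{..<Suc 0} = {0::nat}" by auto
  have sets_eq: "sets (Pi\<^sub>M {0} ?M) = sets (state_space (Suc 0))"
    unfolding state_space_def I by (rule sets_PiM_cong) auto
  have proj: "(\<lambda>x. x 0) \<in> Pi\<^sub>M {0} ?M \<rightarrow>\<^sub>M ?M 0" by measurable
  have emb: "(\<lambda>y. \<lambda>i\<in>{0}. y) \<in> ?M 0 \<rightarrow>\<^sub>M Pi\<^sub>M {0} ?M"
    by (rule measurable_PiM_single') (auto simp: PiE_def extensional_def)
  have "distr (?M 0) (state_space (Suc 0)) (\<lambda>y. \<lambda>i\<in>{..<Suc 0}. y)
      = distr (distr (Pi\<^sub>M {0} ?M) (?M 0) (\<lambda>x. x 0)) (Pi\<^sub>M {0} ?M) (\<lambda>y. \<lambda>i\<in>{0}. y)"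
    using distr_singleton[of 0] sets_eq I by (intro distr_cong) auto
  also have "\<dots> = distr (Pi\<^sub>M {0} ?M) (Pi\<^sub>M {0} ?M) ((\<lambda>y. \<lambda>i\<in>{0}. y) \<circ> (\<lambda>x. x 0))"
    by (rule distr_distr[OF emb proj])
  also have "\<dots> = distr (Pi\<^sub>M {0} ?M) (Pi\<^sub>M {0} ?M) (\<lambda>x. x)"
    by (rule distr_cong) (auto simp: space_PiM PiE_def extensional_def fun_eq_iff)
  also have "\<dots> = Pi\<^sub>M {0} ?M" by (rule distr_id)
  finally show ?thesis unfolding gauss_diag_def I by simp
qed

lemma emb_measurable[measurable]: "(\<lambda>y. \<lambda>i\<in>{..<Suc 0}. y) \<in> borel \<rightarrow>\<^sub>M state_space (Suc 0)"
  unfolding state_space_def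
  by (rule measurable_PiM_single') (auto simp: PiE_def extensional_def)

lemma measurable_gauss_diag:
  assumes g: "(\<lambda>h. mu h 0) \<in> M \<rightarrow>\<^sub>M borel"
  shows "(\<lambda>h. gauss_diag (Suc 0) (mu h) v) \<in> M \<rightarrow>\<^sub>M prob_algebra (state_space (Suc 0))"
  unfolding gauss_diag_1
  by (rule measurable_compose[OF measurable_normal1[OF g] measurable_distr_prob_space[OF emb_measurable]])

lemma nn_integral_gauss_diag:
  assumes f: "f \<in> borel_measurable borel"
  shows "(\<integral>\<^sup>+ y. f (y 0) \<partial>gauss_diag (Suc 0) mu v) = (\<integral>\<^sup>+ y. f y \<partial>normal1 (mu 0) v)"
proof -
  have m: "(\<lambda>y. y 0) \<in> state_space (Suc 0) \<rightarrow>\<^sub>M borel"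
    unfolding state_space_def by measurable
  have "(\<integral>\<^sup>+ y. f (y 0) \<partial>gauss_diag (Suc 0) mu v) =
      (\<integral>\<^sup>+ y. f ((\<lambda>i\<in>{..<Suc 0}. y) 0) \<partial>normal1 (mu 0) v)"
    unfolding gauss_diag_1
  proof (rule nn_integral_distr)
    show "(\<lambda>y. \<lambda>i\<in>{..<Suc 0}. y) \<in> normal1 (mu 0) v \<rightarrow>\<^sub>M state_space (Suc 0)"
      by (subst measurable_cong_sets[OF sets_normal1 refl]) (rule emb_measurable)
    show "(\<lambda>y. f (y 0)) \<in> borel_measurable (distr (normal1 (mu 0) v) (state_space (Suc 0)) (\<lambda>y. \<lambda>i\<in>{..<Suc 0}. y))"
      by (subst measurable_cong_sets[OF sets_distr refl]) (rule measurable_compose[OF m f])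
  qed
  then show ?thesis by simp
qed

lemma AE_gauss_diag_det:
  assumes v: "v \<le> 0"
  shows "AE y in gauss_diag (Suc 0) mu v. y 0 = mu 0"
proof -
  have pr: "Measurable.pred borel (\<lambda>y::real. y = mu 0)" by measurable
  have "AE y in return borel (mu 0). y = mu 0"
    by (subst AE_return[OF _ pr]) auto
  have eq: "normal1 (mu 0) v = return borel (mu 0)" using v by (simp add: normal1_def)
  have "AE y in normal1 (mu 0) v. (\<lambda>i\<in>{..<Suc 0}. y) 0 = mu 0"
    unfolding eq using \<open>AE y in return borel (mu 0). y = mu 0\<close> by simp
  then show ?thesis unfolding gauss_diag_1
    by (subst AE_distr_iff) (auto simp: state_space_def)
qed

lemma normal_exp_identity:
  assumes s: "s > 0"
  shows "exp (c * y) * normal_density mu s y = exp (c * mu + c\<^sup>2 * s\<^sup>2 / 2) * normal_density (mu + c * s\<^sup>2) s y"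
proof -
  have "c * y + (-(y - mu)\<^sup>2 / (2 * s\<^sup>2)) = (c * mu + c\<^sup>2 * s\<^sup>2 / 2) + (-(y - (mu + c * s\<^sup>2))\<^sup>2 / (2 * s\<^sup>2))"
    using s by (simp add: field_simps power2_eq_square)
  then have "exp (c * y) * exp (-(y - mu)\<^sup>2 / (2 * s\<^sup>2)) =
      exp (c * mu + c\<^sup>2 * s\<^sup>2 / 2) * exp (-(y - (mu + c * s\<^sup>2))\<^sup>2 / (2 * s\<^sup>2))"
    by (simp add: exp_add[symmetric])
  then show ?thesis unfolding normal_density_def by (simp add: mult_ac)
qed

lemma nn_integral_normal_density_1: "s > 0 \<Longrightarrow> (\<integral>\<^sup>+ x. ennreal (normal_density mu s x) \<partial>lborel) = 1"
  using integrable_normal_density[of s mu] integral_normal_density[of s mu]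
  by (subst nn_integral_eq_integral) auto

lemma mgf_normal1:
  "(\<integral>\<^sup>+ y. ennreal (exp (c * y)) \<partial>normal1 mu v) = ennreal (exp (c * mu + c\<^sup>2 * max v 0 / 2))"
proof (cases "v \<le> 0")
  case True
  then show ?thesis by (simp add: normal1_def nn_integral_return max_def)
next
  case False
  let ?s = "sqrt v"
  have s: "?s > 0" using False by simp
  have s2: "?s\<^sup>2 = v" using False by simp
  have "(\<integral>\<^sup>+ y. ennreal (exp (c * y)) \<partial>normal1 mu v) =
      (\<integral>\<^sup>+ y. ennreal (normal_density mu ?s y) * ennreal (exp (c * y)) \<partial>lborel)"
    using False by (simp add: normal1_def nn_integral_density)
  also have "\<dots> = (\<integral>\<^sup>+ y. ennreal (exp (c * mu + c\<^sup>2 * v / 2)) * ennreal (normal_density (mu + c * v) ?s y) \<partial>lborel)"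
  proof (intro nn_integral_cong)
    fix y
    have e: "normal_density mu ?s y * exp (c * y) = exp (c * mu + c\<^sup>2 * v / 2) * normal_density (mu + c * v) ?s y"
      using normal_exp_identity[OF s, of c y mu] s2 by (simp add: mult.commute)
    have "ennreal (normal_density mu ?s y) * ennreal (exp (c * y)) = ennreal (normal_density mu ?s y * exp (c * y))"
      by (simp add: ennreal_mult)
    also have "\<dots> = ennreal (exp (c * mu + c\<^sup>2 * v / 2) * normal_density (mu + c * v) ?s y)" by (simp only: e)
    also have "\<dots> = ennreal (exp (c * mu + c\<^sup>2 * v / 2)) * ennreal (normal_density (mu + c * v) ?s y)"
      by (simp add: ennreal_mult)
    finally show "ennreal (normal_density mu ?s y) * ennreal (exp (c * y)) = ennreal (exp (c * mu + c\<^sup>2 * v / 2)) * ennreal (normal_density (mu + c * v) ?s y)" .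
  qed
  also have "\<dots> = ennreal (exp (c * mu + c\<^sup>2 * v / 2))"
    by (simp add: nn_integral_cmult nn_integral_normal_density_1[OF s])
  finally show ?thesis using False by simp
qed

lemma moment_normal01_pos:
  assumes p: "p \<ge> 1"
  shows "(\<integral>\<^sup>+ y. ennreal (\<bar>y\<bar> ^ p) \<partial>normal1 0 1) > 0"
proof -
  let ?f = "\<lambda>y::real. ennreal (normal_density 0 1 y) * ennreal (\<bar>y\<bar> ^ p)"
  have eq: "(\<integral>\<^sup>+ y. ennreal (\<bar>y\<bar> ^ p) \<partial>normal1 0 1) = (\<integral>\<^sup>+ y. ?f y \<partial>lborel)"
    by (simp add: normal1_def nn_integral_density)
  have fm: "?f \<in> borel_measurable lborel" by measurable
  have "(\<integral>\<^sup>+ y. ?f y \<partial>lborel) \<noteq> 0"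
  proof
    assume "(\<integral>\<^sup>+ y. ?f y \<partial>lborel) = 0"
    then have ae: "AE y in lborel. ?f y = 0" using nn_integral_0_iff_AE[OF fm] by simp
    have N: "{y \<in> space lborel. \<not> ?f y = 0} \<in> sets lborel" using fm by measurable
    have "emeasure lborel {y \<in> space lborel. \<not> ?f y = 0} = 0"
      using ae AE_iff_measurable[OF N refl] by simp
    moreover have "{1..2::real} \<subseteq> {y \<in> space lborel. \<not> ?f y = 0}"
      using p normal_density_pos[of 1 0] by (auto simp: less_le)
    then have "emeasure lborel {1..2::real} \<le> emeasure lborel {y \<in> space lborel. \<not> ?f y = 0}"
      using N by (intro emeasure_mono) auto
    ultimately show False by simp
  qed
  then show ?thesis unfolding eq by (simp add: zero_less_iff_neq_zero)
qed



lemma upd_measurable: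
  "(\<lambda>(h, y). h(Suc t := y)) \<in> hist_space nx t \<Otimes>\<^sub>M state_space nx \<rightarrow>\<^sub>M hist_space nx (Suc t)"
proof -
  have eq: "(\<lambda>(h, y). h(Suc t := y)) = (\<lambda>\<omega> i. if i = Suc t then snd \<omega> else fst \<omega> i)"
    by (auto simp: fun_eq_iff)
  show ?thesis unfolding eq hist_space_def
  proof (rule measurable_PiM_single')
    fix i assume i: "i \<in> {..Suc t}"
    show "(\<lambda>\<omega>. if i = Suc t then snd \<omega> else fst \<omega> i) \<in>
        (Pi\<^sub>M {..t} (\<lambda>_. state_space nx)) \<Otimes>\<^sub>M state_space nx \<rightarrow>\<^sub>M state_space nx"
    proof (cases "i = Suc t")
      case True then show ?thesis by simp
    next
      case False
      then have "i \<in> {..t}" using i by auto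
      then have "(\<lambda>\<omega>. fst \<omega> i) \<in> (Pi\<^sub>M {..t} (\<lambda>_. state_space nx)) \<Otimes>\<^sub>M state_space nx \<rightarrow>\<^sub>M state_space nx"
        by (intro measurable_compose[OF measurable_fst measurable_component_singleton])
      then show ?thesis using False by simp
    qed
  next
    show "(\<lambda>\<omega> i. if i = Suc t then snd \<omega> else fst \<omega> i)
        \<in> space ((Pi\<^sub>M {..t} (\<lambda>_. state_space nx)) \<Otimes>\<^sub>M state_space nx) \<rightarrow> (\<Pi>\<^sub>E i\<in>{..Suc t}. space (state_space nx))"
      by (auto simp: space_pair_measure space_PiM PiE_def extensional_def Pi_def)
  qed
qed

lemma upd_measurable2: "h \<in> space (hist_space nx t) \<Longrightarrow>
    (\<lambda>y. h(Suc t := y)) \<in> state_space nx \<rightarrow>\<^sub>M hist_space nx (Suc t)"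
  using measurable_Pair2[OF upd_measurable] by simp

abbreviation GK where "GK nx nu X Y sn k mf mb u t \<equiv> gp_kernel nx nu X Y sn k mf mb u t"

lemma step_kernel_measurable:
  assumes wp: "gp_wellposed nx nu X Y sn k mf mb u"
  shows "(\<lambda>h. distr (gp_kernel nx nu X Y sn k mf mb u t h) (hist_space nx (Suc t)) (\<lambda>y. h(Suc t := y)))
      \<in> hist_space nx t \<rightarrow>\<^sub>M prob_algebra (hist_space nx (Suc t))"
proof (rule measurable_distr_prob_space2)
  show "gp_kernel nx nu X Y sn k mf mb u t \<in> hist_space nx t \<rightarrow>\<^sub>M prob_algebra (state_space nx)"
    using wp by (simp add: gp_wellposed_def)
  show "(\<lambda>(h, y). h(Suc t := y)) \<in> hist_space nx t \<Otimes>\<^sub>M state_space nx \<rightarrow>\<^sub>M hist_space nx (Suc t)"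
    by (rule upd_measurable)
qed

lemma base_in_space: "(\<lambda>j\<in>{..0}. restrict x0 {..<nx}) \<in> space (hist_space nx 0)"
  by (auto simp: hist_space_def state_space_def space_PiM)

lemma gp_hist_prob:
  assumes wp: "gp_wellposed nx nu X Y sn k mf mb u"
  shows "gp_hist nx nu X Y sn k mf mb u x0 t \<in> space (prob_algebra (hist_space nx t))"
proof (induction t)
  case 0
  show ?case using base_in_space[of x0 nx]
    by (simp add: space_prob_algebra prob_space_return)
next
  case (Suc t)
  show ?case
    using prob_space_bind'[OF Suc step_kernel_measurable[OF wp]] sets_bind'[OF Suc step_kernel_measurable[OF wp]]
    by (simp add: space_prob_algebra)
qed

lemma gp_hist_sets:
  assumes wp: "gp_wellposed nx nu X Y sn k mf mb u"
  shows "sets (gp_hist nx nu X Y sn k mf mb u x0 t) = sets (hist_space nx t)"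
  using gp_hist_prob[OF wp] by (simp add: space_prob_algebra)

lemma gp_hist_space:
  assumes wp: "gp_wellposed nx nu X Y sn k mf mb u"
  shows "space (gp_hist nx nu X Y sn k mf mb u x0 t) = space (hist_space nx t)"
  using sets_eq_imp_space_eq[OF gp_hist_sets[OF wp]] .

lemma kernel_prob:
  assumes wp: "gp_wellposed nx nu X Y sn k mf mb u" and h: "h \<in> space (hist_space nx t)"
  shows "prob_space (gp_kernel nx nu X Y sn k mf mb u t h)"
    and "sets (gp_kernel nx nu X Y sn k mf mb u t h) = sets (state_space nx)"
  using measurable_space[OF wp[unfolded gp_wellposed_def, rule_format, of t] h]
  by (auto simp: space_prob_algebra)

lemma hist_step_nn:
  assumes wp: "gp_wellposed nx nu X Y sn k mf mb u"
    and f: "f \<in> borel_measurable (hist_space nx (Suc t))"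
  shows "(\<integral>\<^sup>+ h. f h \<partial>gp_hist nx nu X Y sn k mf mb u x0 (Suc t)) =
    (\<integral>\<^sup>+ h. (\<integral>\<^sup>+ y. f (h(Suc t := y)) \<partial>gp_kernel nx nu X Y sn k mf mb u t h) \<partial>gp_hist nx nu X Y sn k mf mb u x0 t)"
proof -
  let ?H = "gp_hist nx nu X Y sn k mf mb u x0 t"
  let ?K = "gp_kernel nx nu X Y sn k mf mb u t"
  have N: "(\<lambda>h. distr (?K h) (hist_space nx (Suc t)) (\<lambda>y. h(Suc t := y))) \<in> ?H \<rightarrow>\<^sub>M subprob_algebra (hist_space nx (Suc t))"
    using measurable_prob_algebraD[OF step_kernel_measurable[OF wp]]
    by (subst measurable_cong_sets[OF gp_hist_sets[OF wp] refl])
  have "(\<integral>\<^sup>+ h. f h \<partial>gp_hist nx nu X Y sn k mf mb u x0 (Suc t)) =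
     (\<integral>\<^sup>+ h. (\<integral>\<^sup>+ y. f y \<partial>distr (?K h) (hist_space nx (Suc t)) (\<lambda>y. h(Suc t := y))) \<partial>?H)"
    by (simp only: gp_hist.simps) (rule nn_integral_bind[OF f N])
  also have "\<dots> = (\<integral>\<^sup>+ h. (\<integral>\<^sup>+ y. f (h(Suc t := y)) \<partial>?K h) \<partial>?H)"
  proof (rule nn_integral_cong)
    fix h assume "h \<in> space ?H"
    then have h: "h \<in> space (hist_space nx t)" using gp_hist_space[OF wp] by simp
    show "(\<integral>\<^sup>+ y. f y \<partial>distr (?K h) (hist_space nx (Suc t)) (\<lambda>y. h(Suc t := y))) = (\<integral>\<^sup>+ y. f (h(Suc t := y)) \<partial>?K h)"
    proof (rule nn_integral_distr)
      show "(\<lambda>y. h(Suc t := y)) \<in> ?K h \<rightarrow>\<^sub>M hist_space nx (Suc t)"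
        using upd_measurable2[OF h] by (subst measurable_cong_sets[OF kernel_prob(2)[OF wp h] refl])
      show "f \<in> borel_measurable (distr (?K h) (hist_space nx (Suc t)) (\<lambda>y. h(Suc t := y)))"
        using f by (subst measurable_cong_sets[OF sets_distr refl])
    qed
  qed
  finally show ?thesis .
qed

lemma hist_step_AE:
  assumes wp: "gp_wellposed nx nu X Y sn k mf mb u"
    and P: "Measurable.pred (hist_space nx (Suc t)) P"
    and ae: "AE h in gp_hist nx nu X Y sn k mf mb u x0 t. AE y in gp_kernel nx nu X Y sn k mf mb u t h. P (h(Suc t := y))"
  shows "AE h in gp_hist nx nu X Y sn k mf mb u x0 (Suc t). P h"
proof -
  let ?H = "gp_hist nx nu X Y sn k mf mb u x0 t"
  let ?K = "gp_kernel nx nu X Y sn k mf mb u t"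
  have N: "(\<lambda>h. distr (?K h) (hist_space nx (Suc t)) (\<lambda>y. h(Suc t := y))) \<in> ?H \<rightarrow>\<^sub>M subprob_algebra (hist_space nx (Suc t))"
    using measurable_prob_algebraD[OF step_kernel_measurable[OF wp]]
    by (subst measurable_cong_sets[OF gp_hist_sets[OF wp] refl])
  have "AE h in ?H. AE y in distr (?K h) (hist_space nx (Suc t)) (\<lambda>y. h(Suc t := y)). P y"
  proof (rule AE_mp[OF ae AE_I2], intro impI)
    fix h assume "h \<in> space ?H" and a: "AE y in ?K h. P (h(Suc t := y))"
    then have h: "h \<in> space (hist_space nx t)" using gp_hist_space[OF wp] by simp
    have m: "(\<lambda>y. h(Suc t := y)) \<in> ?K h \<rightarrow>\<^sub>M hist_space nx (Suc t)"
      using upd_measurable2[OF h] by (subst measurable_cong_sets[OF kernel_prob(2)[OF wp h] refl])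
    show "AE y in distr (?K h) (hist_space nx (Suc t)) (\<lambda>y. h(Suc t := y)). P y"
      by (subst AE_distr_iff[OF m]) (use P a in auto)
  qed
  then show ?thesis
    by (simp only: gp_hist.simps) (subst AE_bind[OF N P], assumption)
qed

lemma hist_one:
  assumes wp: "gp_wellposed nx nu X Y sn k mf mb u"
  shows "gp_hist nx nu X Y sn k mf mb u x0 (Suc 0) =
    distr (gp_kernel nx nu X Y sn k mf mb u 0 (\<lambda>j\<in>{..0}. restrict x0 {..<nx})) (hist_space nx (Suc 0))
      (\<lambda>y. (\<lambda>j\<in>{..0}. restrict x0 {..<nx})(Suc 0 := y))"
  unfolding gp_hist.simps
  by (rule bind_return[OF measurable_prob_algebraD[OF step_kernel_measurable[OF wp, of 0]] base_in_space])



definition x00 :: "nat \<Rightarrow> real" where "x00 = (\<lambda>_. 0)"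

abbreviation "GH mb m t \<equiv> gp_hist (Suc 0) (Suc 0) XX YY 1 (kernT (Suc m)) mfun mb uu x00 t"
abbreviation "KK mb m t \<equiv> gp_kernel (Suc 0) (Suc 0) XX YY 1 (kernT (Suc m)) mfun mb uu t"

lemma comp_meas: "j \<le> t \<Longrightarrow> (\<lambda>h. h j 0) \<in> borel_measurable (hist_space (Suc 0) t)"
proof -
  assume j: "j \<le> t"
  have a: "(\<lambda>h. h j) \<in> hist_space (Suc 0) t \<rightarrow>\<^sub>M state_space (Suc 0)"
    unfolding hist_space_def by (rule measurable_component_singleton) (use j in auto)
  have b: "(\<lambda>x. x 0) \<in> state_space (Suc 0) \<rightarrow>\<^sub>M (borel :: real measure)"
    unfolding state_space_def by (rule measurable_component_singleton) auto
  show ?thesis using measurable_compose[OF a b] .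
qed

lemma scal_yy: "vvT T mb t \<bullet> yyT mb t h =
    (\<Sum>i<mem_len mb t. vvT T mb t $ i * (h (t - mem_len mb t + 1 + i) 0 - h (t - mem_len mb t + i) 0))"
  unfolding scalar_prod_def dim_yyT
  by (rule sum.cong) (auto simp: yyT_def)

lemma fmean_meas: "(\<lambda>h. fmean (Suc 0) (Suc 0) XX YY 1 (kernT T) mfun mb uu t h 0) \<in> borel_measurable (hist_space (Suc 0) t)"
proof -
  let ?ml = "mem_len mb t"
  have ml: "?ml \<le> t" by (rule mem_len_le)
  have s: "(\<lambda>h. vvT T mb t \<bullet> yyT mb t h) \<in> borel_measurable (hist_space (Suc 0) t)"
    unfolding scal_yy
  proof (rule borel_measurable_sum)
    fix i assume "i \<in> {..<?ml}"
    then have i: "t - ?ml + 1 + i \<le> t" "t - ?ml + i \<le> t" using ml by auto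
    show "(\<lambda>h. vvT T mb t $ i * (h (t - ?ml + 1 + i) 0 - h (t - ?ml + i) 0)) \<in> borel_measurable (hist_space (Suc 0) t)"
      by (intro borel_measurable_times borel_measurable_diff measurable_const comp_meas i) simp
  qed
  show ?thesis unfolding fmean_eq
    by (intro borel_measurable_add borel_measurable_divide borel_measurable_times measurable_const comp_meas s) simp_all
qed

lemma wellposed: "gp_wellposed (Suc 0) (Suc 0) XX YY 1 (kernT T) mfun mb uu"
  unfolding gp_wellposed_def gp_kernel_def fvar_eq
  by (intro allI measurable_gauss_diag fmean_meas)


lemma fun_meas: "j \<le> t \<Longrightarrow> g \<in> borel_measurable borel \<Longrightarrow>
    (\<lambda>h. (g (h j 0) :: ennreal)) \<in> borel_measurable (hist_space (Suc 0) t)"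
  by (rule measurable_compose[OF comp_meas])

lemma exp_meas: "(\<lambda>z::real. ennreal (a * exp (c * z))) \<in> borel_measurable borel"
  by measurable

lemma exp_meas': "(\<lambda>z::real. ennreal (exp (c * z))) \<in> borel_measurable borel"
  by measurable

lemma Phi_short: "(\<integral>\<^sup>+ h. ennreal (exp (c * h t 0)) \<partial>GH (enat m) m t) = ennreal (exp (c\<^sup>2 / 2 * Sq (Suc m) t))"
proof (induction t)
  case 0
  have m: "(\<lambda>h. ennreal (exp (c * h 0 0))) \<in> borel_measurable (hist_space (Suc 0) 0)"
    by (rule fun_meas[OF _ exp_meas']) auto
  show ?case
    by (simp only: gp_hist.simps nn_integral_return[OF base_in_space m]) (simp add: x00_def Sq_def)
next
  case (Suc t)
  let ?L = "lamT (Suc m) t"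
  have f: "(\<lambda>h. ennreal (exp (c * h (Suc t) 0))) \<in> borel_measurable (hist_space (Suc 0) (Suc t))"
    by (rule fun_meas[OF _ exp_meas']) auto
  have g: "(\<lambda>z. ennreal (exp (c * z))) \<in> borel_measurable borel" by measurable
  have "(\<integral>\<^sup>+ h. ennreal (exp (c * h (Suc t) 0)) \<partial>GH (enat m) m (Suc t)) =
      (\<integral>\<^sup>+ h. (\<integral>\<^sup>+ y. ennreal (exp (c * (h(Suc t := y)) (Suc t) 0)) \<partial>KK (enat m) m t h) \<partial>GH (enat m) m t)"
    by (rule hist_step_nn[OF wellposed f])
  also have "\<dots> = (\<integral>\<^sup>+ h. ennreal (exp (c * h t 0)) * ennreal (exp (c\<^sup>2 / 2 * ?L\<^sup>2)) \<partial>GH (enat m) m t)"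
  proof (rule nn_integral_cong)
    fix h
    have "(\<integral>\<^sup>+ y. ennreal (exp (c * (h(Suc t := y)) (Suc t) 0)) \<partial>KK (enat m) m t h)
        = (\<integral>\<^sup>+ y. ennreal (exp (c * y 0)) \<partial>KK (enat m) m t h)" by simp
    also have "\<dots> = (\<integral>\<^sup>+ y. ennreal (exp (c * y)) \<partial>normal1 (h t 0) (?L\<^sup>2))"
      unfolding gp_kernel_def short_fvar
      using nn_integral_gauss_diag[OF g] short_fmean by simp
    also have "\<dots> = ennreal (exp (c * h t 0 + c\<^sup>2 * ?L\<^sup>2 / 2))"
      by (simp add: mgf_normal1 max_def)
    also have "\<dots> = ennreal (exp (c * h t 0)) * ennreal (exp (c\<^sup>2 / 2 * ?L\<^sup>2))"
      by (simp add: exp_add ennreal_mult)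
    finally show "(\<integral>\<^sup>+ y. ennreal (exp (c * (h(Suc t := y)) (Suc t) 0)) \<partial>KK (enat m) m t h)
        = ennreal (exp (c * h t 0)) * ennreal (exp (c\<^sup>2 / 2 * ?L\<^sup>2))" .
  qed
  also have "\<dots> = (\<integral>\<^sup>+ h. ennreal (exp (c * h t 0)) \<partial>GH (enat m) m t) * ennreal (exp (c\<^sup>2 / 2 * ?L\<^sup>2))"
  proof (rule nn_integral_multc)
    show "(\<lambda>h. ennreal (exp (c * h t 0))) \<in> borel_measurable (GH (enat m) m t)"
      by (subst measurable_cong_sets[OF gp_hist_sets[OF wellposed] refl])
         (rule fun_meas[OF _ exp_meas'], simp)
  qed
  also have "\<dots> = ennreal (exp (c\<^sup>2 / 2 * Sq (Suc m) (Suc t)))"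
    unfolding Suc by (simp add: ennreal_mult[symmetric] exp_add[symmetric] Sq_def algebra_simps)
  finally show ?case .
qed

lemma pow_le_fact_exp: "y \<ge> 0 \<Longrightarrow> y ^ p / fact p \<le> exp (y::real)"
proof -
  assume y: "y \<ge> 0"
  have sm: "summable (\<lambda>n. y ^ n /\<^sub>R fact n)"
    using summable_exp[of y] by (simp add: mult.commute divide_inverse)
  have "(\<Sum>n\<in>{p}. y ^ n /\<^sub>R fact n) \<le> (\<Sum>n. y ^ n /\<^sub>R fact n)"
    by (rule sum_le_suminf[OF sm]) (use y in auto)
  then show ?thesis by (simp add: exp_def divide_inverse mult.commute)
qed

lemma abs_pow_le: "\<bar>x::real\<bar> ^ p \<le> fact p * exp x + fact p * exp (- x)"
proof -
  have "\<bar>x\<bar> ^ p / fact p \<le> exp \<bar>x\<bar>" by (rule pow_le_fact_exp) simp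
  then have a: "\<bar>x\<bar> ^ p \<le> fact p * exp \<bar>x\<bar>" by (simp add: field_simps)
  have "exp \<bar>x\<bar> \<le> exp x + exp (- x)" by (cases "x \<ge> 0") (auto simp: add_increasing add_increasing2)
  then have "fact p * exp \<bar>x\<bar> \<le> fact p * (exp x + exp (- x))" by (intro mult_left_mono) auto
  with a show ?thesis by (simp add: distrib_left)
qed

lemma moment_short_bound:
  "gp_moment (Suc 0) (Suc 0) XX YY 1 (kernT (Suc m)) mfun (enat m) uu x00 p t \<le> ennreal (2 * fact p * exp 1)"
proof -
  have me: "\<And>c. (\<lambda>h. ennreal (fact p * exp (c * h t 0))) \<in> borel_measurable (GH (enat m) m t)"
    by (subst measurable_cong_sets[OF gp_hist_sets[OF wellposed] refl])
       (rule fun_meas[OF _ exp_meas], simp)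
  have I: "\<And>c. (\<integral>\<^sup>+ h. ennreal (fact p * exp (c * h t 0)) \<partial>GH (enat m) m t) = ennreal (fact p) * ennreal (exp (c\<^sup>2 / 2 * Sq (Suc m) t))"
  proof -
    fix c :: real
    have mm: "(\<lambda>h. ennreal (exp (c * h t 0))) \<in> borel_measurable (GH (enat m) m t)"
      by (subst measurable_cong_sets[OF gp_hist_sets[OF wellposed] refl])
         (rule fun_meas[OF _ exp_meas'], simp)
    have "(\<integral>\<^sup>+ h. ennreal (fact p * exp (c * h t 0)) \<partial>GH (enat m) m t) = (\<integral>\<^sup>+ h. ennreal (fact p) * ennreal (exp (c * h t 0)) \<partial>GH (enat m) m t)"
      by (simp add: ennreal_mult)
    also have "\<dots> = ennreal (fact p) * (\<integral>\<^sup>+ h. ennreal (exp (c * h t 0)) \<partial>GH (enat m) m t)"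
      by (rule nn_integral_cmult[OF mm])
    finally show "(\<integral>\<^sup>+ h. ennreal (fact p * exp (c * h t 0)) \<partial>GH (enat m) m t) = ennreal (fact p) * ennreal (exp (c\<^sup>2 / 2 * Sq (Suc m) t))"
      by (simp only: Phi_short)
  qed
  have "gp_moment (Suc 0) (Suc 0) XX YY 1 (kernT (Suc m)) mfun (enat m) uu x00 p t =
      (\<integral>\<^sup>+ h. ennreal (\<bar>h t 0\<bar> ^ p) \<partial>GH (enat m) m t)"
    unfolding gp_moment_def by simp
  also have "\<dots> \<le> (\<integral>\<^sup>+ h. ennreal (fact p * exp (1 * h t 0)) + ennreal (fact p * exp ((-1) * h t 0)) \<partial>GH (enat m) m t)"
    by (intro nn_integral_mono) (simp add: ennreal_plus[symmetric] abs_pow_le del: ennreal_plus)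
  also have "\<dots> = (\<integral>\<^sup>+ h. ennreal (fact p * exp (1 * h t 0)) \<partial>GH (enat m) m t) + (\<integral>\<^sup>+ h. ennreal (fact p * exp ((-1) * h t 0)) \<partial>GH (enat m) m t)"
    by (rule nn_integral_add[OF me me])
  also have "\<dots> = ennreal (fact p) * ennreal (exp (1\<^sup>2 / 2 * Sq (Suc m) t)) + ennreal (fact p) * ennreal (exp ((-1)\<^sup>2 / 2 * Sq (Suc m) t))"
    by (simp only: I)
  also have "\<dots> = ennreal (2 * fact p * exp (Sq (Suc m) t / 2))"
    by (simp add: ennreal_mult[symmetric] ennreal_plus[symmetric] del: ennreal_plus)
  also have "\<dots> \<le> ennreal (2 * fact p * exp 1)"
    using Sq_le2[of "Suc m" t] by (intro ennreal_leI mult_left_mono) auto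
  finally show ?thesis .
qed



definition InvP :: "nat \<Rightarrow> nat \<Rightarrow> (nat \<Rightarrow> nat \<Rightarrow> real) \<Rightarrow> bool" where
  "InvP m t h = (\<forall>j\<in>{..t}. h j 0 - Hs (Suc m) j * h 1 0 = 0)"

lemma inv_pred: "1 \<le> t \<Longrightarrow> Measurable.pred (hist_space (Suc 0) t) (InvP m t)"
  unfolding InvP_def
proof (intro pred_intros_finite finite_atMost)
  fix j assume "1 \<le> t" "j \<in> {..t}"
  then show "Measurable.pred (hist_space (Suc 0) t) (\<lambda>h. h j 0 - Hs (Suc m) j * h 1 0 = 0)"
    by (intro pred_eq_const1[where N = borel] borel_measurable_diff borel_measurable_times measurable_const comp_meas) auto
qed

lemma Hs0[simp]: "Hs T 0 = 0" by (simp add: Hs_def)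
lemma Hs1[simp]: "Hs T (Suc 0) = 1" by (simp add: Hs_def lamT_def cntT_def)

lemma inv_AE:
  assumes mb: "enat m < mb'"
  shows "AE h in GH mb' m (Suc n). InvP m (Suc n) h"
proof (induction n)
  case 0
  let ?b = "(\<lambda>j\<in>{..0}. restrict x00 {..<Suc 0})"
  have b: "?b \<in> space (hist_space (Suc 0) 0)" by (rule base_in_space)
  have mm: "(\<lambda>y. ?b(Suc 0 := y)) \<in> KK mb' m 0 ?b \<rightarrow>\<^sub>M hist_space (Suc 0) (Suc 0)"
    using upd_measurable2[OF b] by (subst measurable_cong_sets[OF kernel_prob(2)[OF wellposed b] refl])
  have P: "{x \<in> space (hist_space (Suc 0) (Suc 0)). InvP m (Suc 0) x} \<in> sets (hist_space (Suc 0) (Suc 0))"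
    using inv_pred[of "Suc 0" m] by simp
  show ?case
    unfolding hist_one[OF wellposed]
    by (subst AE_distr_iff[OF mm P], rule AE_I2) (auto simp: InvP_def x00_def le_Suc_eq)
next
  case (Suc n)
  let ?t = "Suc n"
  show ?case
  proof (rule hist_step_AE[OF wellposed inv_pred])
    show "1 \<le> Suc ?t" by simp
    show "AE h in GH mb' m ?t. AE y in KK mb' m ?t h. InvP m (Suc ?t) (h(Suc ?t := y))"
    proof (rule AE_mp[OF Suc AE_I2], intro impI)
      fix h assume inv: "InvP m ?t h"
      have inv': "\<forall>j\<le>?t. h j 0 = Hs (Suc m) j * h 1 0"
      proof (intro allI impI)
        fix j assume "j \<le> ?t"
        then have "h j 0 - Hs (Suc m) j * h 1 0 = 0" using inv unfolding InvP_def by blast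
        then show "h j 0 = Hs (Suc m) j * h 1 0" by linarith
      qed
      have fv: "fvar (Suc 0) (Suc 0) XX 1 (kernT (Suc m)) mb' uu ?t h = 0"
        by (rule long_fvar[OF mb]) simp
      have fm: "fmean (Suc 0) (Suc 0) XX YY 1 (kernT (Suc m)) mfun mb' uu ?t h 0 = Hs (Suc m) (Suc ?t) * h 1 0"
        by (rule long_fmean[OF mb, of ?t h, OF _ inv']) simp
      have "AE y in KK mb' m ?t h. y 0 = Hs (Suc m) (Suc ?t) * h 1 0"
        unfolding gp_kernel_def fv
        using AE_gauss_diag_det[of 0 "fmean (Suc 0) (Suc 0) XX YY 1 (kernT (Suc m)) mfun mb' uu ?t h", unfolded fm] by simp
      then show "AE y in KK mb' m ?t h. InvP m (Suc ?t) (h(Suc ?t := y))"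
      proof (rule eventually_mono)
        fix y :: "nat \<Rightarrow> real" assume y: "y 0 = Hs (Suc m) (Suc ?t) * h 1 0"
        show "InvP m (Suc ?t) (h(Suc ?t := y))"
          unfolding InvP_def
        proof
          fix j assume "j \<in> {..Suc ?t}"
          then consider "j \<le> ?t" | "j = Suc ?t" by (auto simp: le_Suc_eq)
          then show "(h(Suc ?t := y)) j 0 - Hs (Suc m) j * (h(Suc ?t := y)) 1 0 = 0"
          proof cases
            case 1
            have "h j 0 = Hs (Suc m) j * h 1 0" using inv' 1 by blast
            moreover have "(h(Suc ?t := y)) j = h j" "(h(Suc ?t := y)) 1 = h 1" using 1 by auto
            ultimately show ?thesis by (simp only:)
          next
            case 2 then show ?thesis using y by simp
          qed
        qed
      qed
    qed
  qed
qed

lemma marg: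
  assumes g: "g \<in> borel_measurable borel"
  shows "(\<integral>\<^sup>+ h. g (h 1 0) \<partial>GH mb' m (Suc n)) = (\<integral>\<^sup>+ h. g (h 1 0) \<partial>GH mb' m (Suc 0))"
proof (induction n)
  case 0 then show ?case by simp
next
  case (Suc n)
  let ?t = "Suc n"
  have f: "(\<lambda>h. g (h 1 0)) \<in> borel_measurable (hist_space (Suc 0) (Suc ?t))"
    by (rule fun_meas[OF _ g]) simp
  have "(\<integral>\<^sup>+ h. g (h 1 0) \<partial>GH mb' m (Suc ?t)) =
      (\<integral>\<^sup>+ h. (\<integral>\<^sup>+ y. g ((h(Suc ?t := y)) 1 0) \<partial>KK mb' m ?t h) \<partial>GH mb' m ?t)"
    by (rule hist_step_nn[OF wellposed f])
  also have "\<dots> = (\<integral>\<^sup>+ h. g (h 1 0) \<partial>GH mb' m ?t)"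
  proof (rule nn_integral_cong)
    fix h assume hh: "h \<in> space (GH mb' m ?t)"
    have h: "h \<in> space (hist_space (Suc 0) ?t)" using hh by (simp only: gp_hist_space[OF wellposed])
    have "(\<integral>\<^sup>+ y. g ((h(Suc ?t := y)) 1 0) \<partial>KK mb' m ?t h) = (\<integral>\<^sup>+ y. g (h 1 0) \<partial>KK mb' m ?t h)"
      by simp
    also have "\<dots> = g (h 1 0)"
      using prob_space.emeasure_space_1[OF kernel_prob(1)[OF wellposed h]] by (simp add: nn_integral_const)
    finally show "(\<integral>\<^sup>+ y. g ((h(Suc ?t := y)) 1 0) \<partial>KK mb' m ?t h) = g (h 1 0)" .
  qed
  finally show ?case using Suc by simp
qed

lemma vvT_zero[simp]: "vvT T mb 0 \<bullet> vvT T mb 0 = 0"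
  by (simp add: vvT_def mem_len_def scalar_prod_def zero_enat_def[symmetric])

lemma M1: "(\<integral>\<^sup>+ h. ennreal (\<bar>h 1 0\<bar> ^ p) \<partial>GH mb' m (Suc 0)) = (\<integral>\<^sup>+ y. ennreal (\<bar>y\<bar> ^ p) \<partial>normal1 0 1)"
proof -
  let ?b = "(\<lambda>j\<in>{..0}. restrict x00 {..<Suc 0})"
  have b: "?b \<in> space (hist_space (Suc 0) 0)" by (rule base_in_space)
  have mm: "(\<lambda>y. ?b(Suc 0 := y)) \<in> KK mb' m 0 ?b \<rightarrow>\<^sub>M hist_space (Suc 0) (Suc 0)"
    using upd_measurable2[OF b] by (subst measurable_cong_sets[OF kernel_prob(2)[OF wellposed b] refl])
  have g: "(\<lambda>z::real. ennreal (\<bar>z\<bar> ^ p)) \<in> borel_measurable borel" by measurable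
  have f: "(\<lambda>h. ennreal (\<bar>h 1 0\<bar> ^ p)) \<in> borel_measurable (distr (KK mb' m 0 ?b) (hist_space (Suc 0) (Suc 0)) (\<lambda>y. ?b(Suc 0 := y)))"
    by (subst measurable_cong_sets[OF sets_distr refl]) (rule fun_meas[OF _ g], simp)
  have fm: "fmean (Suc 0) (Suc 0) XX YY 1 (kernT (Suc m)) mfun mb' uu 0 ?b 0 = 0"
    unfolding fmean_eq by (simp add: x00_def)
  have fv: "fvar (Suc 0) (Suc 0) XX 1 (kernT (Suc m)) mb' uu 0 ?b = 1"
    unfolding fvar_eq by (simp add: lamT_def cntT_def)
  have "(\<integral>\<^sup>+ h. ennreal (\<bar>h 1 0\<bar> ^ p) \<partial>GH mb' m (Suc 0)) = (\<integral>\<^sup>+ y. ennreal (\<bar>y 0\<bar> ^ p) \<partial>KK mb' m 0 ?b)"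
    unfolding hist_one[OF wellposed] by (subst nn_integral_distr[OF mm f]) simp
  also have "\<dots> = (\<integral>\<^sup>+ y. ennreal (\<bar>y\<bar> ^ p) \<partial>normal1 0 1)"
    unfolding gp_kernel_def fv using nn_integral_gauss_diag[OF g] fm by simp
  finally show ?thesis .
qed

lemma long_moment:
  assumes mb: "enat m < mb'"
  shows "gp_moment (Suc 0) (Suc 0) XX YY 1 (kernT (Suc m)) mfun mb' uu x00 p (Suc n) =
    ennreal (\<bar>Hs (Suc m) (Suc n)\<bar> ^ p) * (\<integral>\<^sup>+ y. ennreal (\<bar>y\<bar> ^ p) \<partial>normal1 0 1)"
proof -
  have g: "(\<lambda>z::real. ennreal (\<bar>z\<bar> ^ p)) \<in> borel_measurable borel" by measurable
  have "gp_moment (Suc 0) (Suc 0) XX YY 1 (kernT (Suc m)) mfun mb' uu x00 p (Suc n) =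
      (\<integral>\<^sup>+ h. ennreal (\<bar>h (Suc n) 0\<bar> ^ p) \<partial>GH mb' m (Suc n))"
    unfolding gp_moment_def by simp
  also have "\<dots> = (\<integral>\<^sup>+ h. ennreal (\<bar>Hs (Suc m) (Suc n)\<bar> ^ p) * ennreal (\<bar>h 1 0\<bar> ^ p) \<partial>GH mb' m (Suc n))"
  proof (rule nn_integral_cong_AE)
    show "AE h in GH mb' m (Suc n). ennreal (\<bar>h (Suc n) 0\<bar> ^ p) = ennreal (\<bar>Hs (Suc m) (Suc n)\<bar> ^ p) * ennreal (\<bar>h 1 0\<bar> ^ p)"
      using inv_AE[OF mb, of n]
    proof (rule eventually_mono)
      fix h assume "InvP m (Suc n) h"
      then have "h (Suc n) 0 - Hs (Suc m) (Suc n) * h 1 0 = 0" unfolding InvP_def by blast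
      then have "h (Suc n) 0 = Hs (Suc m) (Suc n) * h 1 0" by linarith
      then show "ennreal (\<bar>h (Suc n) 0\<bar> ^ p) = ennreal (\<bar>Hs (Suc m) (Suc n)\<bar> ^ p) * ennreal (\<bar>h 1 0\<bar> ^ p)"
        by (simp add: abs_mult power_mult_distrib ennreal_mult)
    qed
  qed
  also have "\<dots> = ennreal (\<bar>Hs (Suc m) (Suc n)\<bar> ^ p) * (\<integral>\<^sup>+ h. ennreal (\<bar>h 1 0\<bar> ^ p) \<partial>GH mb' m (Suc n))"
  proof (rule nn_integral_cmult)
    have a: "(\<lambda>h. ennreal (\<bar>h 1 0\<bar> ^ p)) \<in> borel_measurable (hist_space (Suc 0) (Suc n))"
      by (rule fun_meas[OF _ g]) simp
    show "(\<lambda>h. ennreal (\<bar>h 1 0\<bar> ^ p)) \<in> borel_measurable (GH mb' m (Suc n))"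
      unfolding measurable_cong_sets[OF gp_hist_sets[OF wellposed[where T="Suc m" and mb=mb'], of x00 "Suc n"] refl]
      by (rule a)
  qed
  also have "(\<integral>\<^sup>+ h. ennreal (\<bar>h 1 0\<bar> ^ p) \<partial>GH mb' m (Suc n)) = (\<integral>\<^sup>+ y. ennreal (\<bar>y\<bar> ^ p) \<partial>normal1 0 1)"
    by (rule trans[OF marg[OF g] M1])
  finally show ?thesis .
qed



lemma sym_kernT: "sym_kernel_on n (kernT T)"
  by (simp add: sym_kernel_on_def kernT_def mult.commute)

lemma psd_kernT: "psd_kernel_on n (kernT T)"
  unfolding psd_kernel_on_def
proof (intro allI impI)
  fix zs :: "real vec list" and c :: "nat \<Rightarrow> real"
  let ?f = "\<lambda>i. c i * lamT T (nat \<lfloor>zs ! i $ 1\<rfloor>)"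
  have "(\<Sum>i<length zs. \<Sum>j<length zs. c i * c j * kernT T (zs ! i) (zs ! j)) =
      (\<Sum>i<length zs. \<Sum>j<length zs. ?f i * ?f j)"
    by (simp add: kernT_def mult_ac)
  also have "\<dots> = (\<Sum>i<length zs. ?f i) * (\<Sum>j<length zs. ?f j)"
    by (simp add: sum_product)
  also have "\<dots> \<ge> 0" by simp
  finally show "(\<Sum>i<length zs. \<Sum>j<length zs. c i * c j * kernT T (zs ! i) (zs ! j)) \<ge> 0" .
qed

lemma vnorm_ge: "i < dim_vec v \<Longrightarrow> \<bar>v $ i\<bar> \<le> vnorm v"
proof -
  assume i: "i < dim_vec v"
  have "(v $ i)\<^sup>2 \<le> (\<Sum>j<dim_vec v. (v $ j)\<^sup>2)"
    by (rule member_le_sum[of i "{..<dim_vec v}" "\<lambda>j. (v $ j)\<^sup>2"]) (use i in auto)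
  then have "sqrt ((v $ i)\<^sup>2) \<le> sqrt (\<Sum>j<dim_vec v. (v $ j)\<^sup>2)" by (rule real_sqrt_le_mono)
  then show ?thesis by (simp add: vnorm_def)
qed

lemma cont_mfun: "continuous_mean_on (Suc (Suc n)) mfun"
  unfolding continuous_mean_on_def
proof (intro ballI allI impI)
  fix a :: "real vec" and e :: real assume a: "a \<in> carrier_vec (Suc (Suc n))" and e: "e > 0"
  show "\<exists>d>0. \<forall>b\<in>carrier_vec (Suc (Suc n)). vnorm (b - a) < d \<longrightarrow> \<bar>mfun b - mfun a\<bar> < e"
  proof (intro exI conjI ballI impI)
    show "e > 0" by (rule e)
    fix b assume b: "b \<in> carrier_vec (Suc (Suc n))" and lt: "vnorm (b - a) < e"
    have "\<bar>(b - a) $ 0\<bar> \<le> vnorm (b - a)" by (rule vnorm_ge) (use a b in simp)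
    moreover have "(b - a) $ 0 = b $ 0 - a $ 0" using a b by simp
    ultimately show "\<bar>mfun b - mfun a\<bar> < e" using lt by (simp add: mfun_def)
  qed
qed

lemma SUP_top_ennreal:
  fixes f :: "nat \<Rightarrow> ennreal"
  assumes "\<And>r. r \<ge> 0 \<Longrightarrow> \<exists>t. ennreal r < f t"
  shows "(SUP t. f t) = \<infinity>"
proof -
  have "\<And>r. r \<ge> 0 \<Longrightarrow> ennreal r \<le> (SUP t. f t)"
  proof -
    fix r :: real assume "r \<ge> 0"
    then obtain t where "ennreal r < f t" using assms by blast
    then show "ennreal r \<le> (SUP t. f t)" by (meson SUP_upper UNIV_I less_imp_le order_trans)
  qed
  note H = this
  show ?thesis
  proof (rule ccontr)
    assume ne: "(SUP t. f t) \<noteq> \<infinity>"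
    obtain s where s: "(SUP t. f t) = ennreal s" "s \<ge> 0"
      using ne by (cases "SUP t. f t" rule: ennreal_cases) auto
    have "ennreal (s + 1) \<le> ennreal s" using H[of "s + 1"] s by simp
    then have "s + 1 \<le> s" using s by (simp add: ennreal_le_iff)
    then show False by simp
  qed
qed

theorem theorem2:
  fixes mb mb' :: enat and p :: nat
  assumes "mb < mb'" and "1 \<le> p"
  shows "\<exists>nx nu X Y sn k mf u x0.
     X \<in> carrier_mat (nx + nu) (dim_col X) \<and> Y \<in> carrier_mat (dim_col X) nx \<and>
     sn > 0 \<and> sym_kernel_on (nx + nu) k \<and> psd_kernel_on (nx + nu) k \<and>
     continuous_mean_on (nx + nu) mf \<and>
     gp_wellposed nx nu X Y sn k mf mb u \<and> gp_wellposed nx nu X Y sn k mf mb' u \<and>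
     (SUP t. gp_moment nx nu X Y sn k mf mb u x0 p t) < \<infinity> \<and>
     (SUP t. gp_moment nx nu X Y sn k mf mb' u x0 p t) = \<infinity>"
proof -
  obtain m where mb: "mb = enat m" using assms(1) by (cases mb) auto
  have mb': "enat m < mb'" using assms(1) mb by simp
  let ?T = "Suc m"
  have short: "(SUP t. gp_moment (Suc 0) (Suc 0) XX YY 1 (kernT ?T) mfun mb uu x00 p t) < \<infinity>"
  proof -
    have "(SUP t. gp_moment (Suc 0) (Suc 0) XX YY 1 (kernT ?T) mfun mb uu x00 p t) \<le> ennreal (2 * fact p * exp 1)"
      unfolding mb by (rule SUP_least) (rule moment_short_bound)
    also have "\<dots> < \<infinity>" by simp
    finally show ?thesis .
  qed
  let ?Mp = "\<integral>\<^sup>+ y. ennreal (\<bar>y\<bar> ^ p) \<partial>normal1 0 1"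
  have Mp: "?Mp > 0" by (rule moment_normal01_pos[OF assms(2)])
  have long: "(SUP t. gp_moment (Suc 0) (Suc 0) XX YY 1 (kernT ?T) mfun mb' uu x00 p t) = \<infinity>"
  proof (rule SUP_top_ennreal)
    fix r :: real assume r: "r \<ge> 0"
    show "\<exists>t. ennreal r < gp_moment (Suc 0) (Suc 0) XX YY 1 (kernT ?T) mfun mb' uu x00 p t"
    proof (cases "?Mp = \<infinity>")
      case True
      have "gp_moment (Suc 0) (Suc 0) XX YY 1 (kernT ?T) mfun mb' uu x00 p (Suc 0) = \<infinity>"
        using long_moment[OF mb', of p 0] True by simp
      then show ?thesis by (intro exI[of _ "Suc 0"]) simp
    next
      case False
      then obtain q where q: "?Mp = ennreal q" "q \<ge> 0" by (cases ?Mp) auto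
      have qpos: "q > 0" using Mp q by simp
      define B where "B = r / q + 1"
      have B1: "B \<ge> 1" using r qpos by (simp add: B_def)
      define k where "k = nat \<lceil>exp B\<rceil>"
      have "exp B \<le> real k" unfolding k_def by (rule real_nat_ceiling_ge)
      then have ek: "exp B \<le> real k + 2" by linarith
      have "ln (exp B) \<le> ln (real k + 2)" using ek by (subst ln_le_cancel_iff) auto
      then have "B \<le> ln (real k + 2)" by simp
      also have "\<dots> \<le> Hs ?T (?T * k + 1)" by (rule Hs_unbounded) simp
      finally have HB: "B \<le> Hs ?T (?T * k + 1)" .
      let ?H = "Hs ?T (?T * k + 1)"
      have H1: "?H \<ge> 1" using B1 HB by simp
      have "?H \<le> ?H ^ p" using H1 assms(2) by (metis One_nat_def power_increasing power_one_right)
      then have Hp: "B \<le> \<bar>?H\<bar> ^ p" using HB H1 by simp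
      have "r < B * q" using qpos by (simp add: B_def field_simps)
      also have "\<dots> \<le> \<bar>?H\<bar> ^ p * q" using Hp qpos by (intro mult_right_mono) auto
      finally have lt: "r < \<bar>?H\<bar> ^ p * q" .
      have "gp_moment (Suc 0) (Suc 0) XX YY 1 (kernT ?T) mfun mb' uu x00 p (Suc (?T * k)) = ennreal (\<bar>?H\<bar> ^ p * q)"
        using long_moment[OF mb', of p "?T * k"] q by (simp add: ennreal_mult)
      then show ?thesis using lt r by (intro exI[of _ "Suc (?T * k)"]) (simp add: ennreal_lessI)
    qed
  qed
  show ?thesis
  proof (intro exI conjI)
    show "XX \<in> carrier_mat (Suc 0 + Suc 0) (dim_col XX)" by (simp add: XX_def numeral_2_eq_2)
    show "YY \<in> carrier_mat (dim_col XX) (Suc 0)" by (simp add: XX_def YY_def)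
    show "(1::real) > 0" by simp
    show "sym_kernel_on (Suc 0 + Suc 0) (kernT ?T)" by (rule sym_kernT)
    show "psd_kernel_on (Suc 0 + Suc 0) (kernT ?T)" by (rule psd_kernT)
    show "continuous_mean_on (Suc 0 + Suc 0) mfun" using cont_mfun[of 0] by simp
    show "gp_wellposed (Suc 0) (Suc 0) XX YY 1 (kernT ?T) mfun mb uu" by (rule wellposed)
    show "gp_wellposed (Suc 0) (Suc 0) XX YY 1 (kernT ?T) mfun mb' uu" by (rule wellposed)
  qed (rule short, rule long)
qed

end
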